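(* Let $(\mathbb T^2,g)$ be a two-dimensional Riemannian torus and $m\ge1$. If $(\mathbb T^2,g)$ admits a real irreducible rank $m$ Killing tensor field, then $Z^{m-1,c}$ is a potential tensor field for some constant real pseudovector $c\neq0$ of weight $m$. Conversely, assume $(\mathbb T^2,g)$ admits no irreducible Killing tensor fields of ranks $1,\dots,m-1$ (no condition if $m=1$). If $Z^{m-1,c}$ is potential for some constant pseudovector $c\neq0$ of weight $m$, then there exists an irreducible rank $m$ Killing tensor field on the torus.
   Context: Symmetric tensor fields on a Riemannian manifold, product $fh=\sigma(f\otimes h)$, $d=\sigma\nabla$ (symmetrized Levi-Civita covariant derivative). $f$ is Killing if $df=0$; a Killing field of rank $\neq2$ is irreducible if it is not a finite sum $\sum u_iv_i$ of products of Killing fields of positive ranks; for rank 2 one also requires $f\neq cg$, $c$ constant. A field $h$ is potential if $h=dv$ for some smooth symmetric tensor field $v$ (a rank 0 potential field is the zero function). Global isothermal coordinates: $\mathbb T^2=\mathbb C/\Gamma$ for a lattice $\Gamma$, $g=e^{2\mu}(dx^2+dy^2)$ with $\mu$ smooth $\Gamma$-periodic, unique up to $z=az'+b$ for a fixed orientation. A pseudovector of weight $k$ assigns to each such coordinate system a pair $(X^1,X^2)$ with $X^1+iX^2=a^k(X'^1+iX'^2)$, $X^1-iX^2=\bar a^k(X'^1-iX'^2)$ under $z=az'$; constant if $X^1,X^2$ are constants, real if they are real. For $k\ge0$ and a constant pseudovector $c$ of weight $k+1$, $Z^{k,c}$ is the trace free symmetric rank $k$ tensor field with, in global isothermal coordinates,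 $Z^{k,c}_{1\dots1}=e^{2k\mu}(c^1\mu_x+c^2\mu_y)$, $Z^{k,c}_{1\dots12}=e^{2k\mu}(c^2\mu_x-c^1\mu_y)$, the other components being determined by trace freeness $Z_{1\dots1\,2\dots2}+Z_{1\dots1\,2\dots2\,22}=0$; for $k=0$, $Z^{0,c}=c^1\mu_x+c^2\mu_y$. *)

theory Defs
  imports "HOL-Analysis.Analysis"
begin

text \<open>The torus is T2 = C / Gamma, Gamma the lattice spanned by two
 R-linearly independent periods w1 w2; the metric is g = exp(2 mu)(dx^2+dy^2) in
 these global isothermal coordinates, mu smooth and Gamma-periodic.  Tensor fields on the
 torus are represented by their (complex valued, Gamma-periodic) components in these
 coordinates.  A symmetric rank k field f is stored as f :: nat => complex => complex,
 where f j is the component f_{1..1 2..2} with exactly j indices equal to 2 (j <= k),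
 and f j = 0 for j > k.\<close>

definition pdx :: "(complex \<Rightarrow> 'a::real_normed_vector) \<Rightarrow> complex \<Rightarrow> 'a" where
  "pdx f z = frechet_derivative f (at z) 1"

definition pdy :: "(complex \<Rightarrow> 'a::real_normed_vector) \<Rightarrow> complex \<Rightarrow> 'a" where
  "pdy f z = frechet_derivative f (at z) \<i>"

fun Ck :: "nat \<Rightarrow> (complex \<Rightarrow> 'a::real_normed_vector) \<Rightarrow> bool" where
  "Ck 0 f = continuous_on UNIV f"
| "Ck (Suc k) f = (f differentiable_on UNIV \<and> Ck k (pdx f) \<and> Ck k (pdy f))"

definition smooth :: "(complex \<Rightarrow> 'a::real_normed_vector) \<Rightarrow> bool" where
  "smooth f = (\<forall>k. Ck k f)"

definition is_lattice :: "complex \<Rightarrow> complex \<Rightarrow> bool" where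
  "is_lattice w1 w2 = (Im (w2 * cnj w1) \<noteq> 0)"

definition periodic :: "complex \<Rightarrow> complex \<Rightarrow> (complex \<Rightarrow> 'a) \<Rightarrow> bool" where
  "periodic w1 w2 f = (\<forall>z. f (z + w1) = f z \<and> f (z + w2) = f z)"

definition tfield :: "complex \<Rightarrow> complex \<Rightarrow> nat \<Rightarrow> (nat \<Rightarrow> complex \<Rightarrow> complex) \<Rightarrow> bool" where
  "tfield w1 w2 k f =
     ((\<forall>j\<le>k. smooth (f j) \<and> periodic w1 w2 (f j)) \<and> (\<forall>j>k. f j = (\<lambda>z. 0)))"

definition real_field :: "(nat \<Rightarrow> complex \<Rightarrow> complex) \<Rightarrow> bool" where
  "real_field f = (\<forall>j z. Im (f j z) = 0)"

definition pd :: "(complex \<Rightarrow> 'a::real_normed_vector) \<Rightarrow> nat \<Rightarrow> complex \<Rightarrow> 'a" where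
  "pd f i = (if i = 1 then pdx f else pdy f)"

text \<open>Christoffel symbols Gamma^q_{ip} of g = exp(2 mu) delta:
  Gamma^q_{ip} = delta^q_i mu_p + delta^q_p mu_i - delta_{ip} mu_q.\<close>
definition chr :: "(complex \<Rightarrow> real) \<Rightarrow> nat \<Rightarrow> nat \<Rightarrow> nat \<Rightarrow> complex \<Rightarrow> real" where
  "chr mu q i p z =
     (if q = i then pd mu p z else 0) + (if q = p then pd mu i z else 0)
     - (if i = p then pd mu q z else 0)"

text \<open>Covariant derivative: nab mu k f i j = (nabla_i f)_{1..1 2..2} (j twos), for f of rank k.
  nabla_i f_{i1..ik} = d_i f_{i1..ik} - sum_p Gamma^q_{i i_p} f_{i1..q..ik}.\<close>
definition nab :: "(complex \<Rightarrow> real) \<Rightarrow> nat \<Rightarrow> (nat \<Rightarrow> complex \<Rightarrow> complex) \<Rightarrow> nat \<Rightarrow> nat \<Rightarrow> complex \<Rightarrow> complex" where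
  "nab mu k f i j z =
     pd (f j) i z
     - of_nat (k - j) * (of_real (chr mu 1 i 1 z) * f j z + of_real (chr mu 2 i 1 z) * f (j + 1) z)
     - of_nat j * (of_real (chr mu 1 i 2 z) * f (j - 1) z + of_real (chr mu 2 i 2 z) * f j z)"

text \<open>Symmetrized covariant derivative d = sigma nabla, rank k to rank k+1.\<close>
definition dsym :: "(complex \<Rightarrow> real) \<Rightarrow> nat \<Rightarrow> (nat \<Rightarrow> complex \<Rightarrow> complex) \<Rightarrow> nat \<Rightarrow> complex \<Rightarrow> complex" where
  "dsym mu k f j z =
     (if j \<le> k + 1 then
        (of_nat (k + 1 - j) * nab mu k f 1 j z + of_nat j * nab mu k f 2 (j - 1) z) / of_nat (k + 1)
      else 0)"

text \<open>Symmetric product sigma(f (x) h) of a rank k field f and a rank l field h.\<close>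
definition sprod :: "nat \<Rightarrow> nat \<Rightarrow> (nat \<Rightarrow> complex \<Rightarrow> complex) \<Rightarrow> (nat \<Rightarrow> complex \<Rightarrow> complex)
                     \<Rightarrow> nat \<Rightarrow> complex \<Rightarrow> complex" where
  "sprod k l f h j z =
     (if j \<le> k + l then
        (\<Sum>a\<le>k. \<Sum>b\<le>l. if a + b = j then of_nat (k choose a) * of_nat (l choose b) * f a z * h b z else 0)
        / of_nat ((k + l) choose j)
      else 0)"

definition metric_tensor :: "(complex \<Rightarrow> real) \<Rightarrow> nat \<Rightarrow> complex \<Rightarrow> complex" where
  "metric_tensor mu j z = (if j = 0 \<or> j = 2 then of_real (exp (2 * mu z)) else 0)"

definition killing :: "complex \<Rightarrow> complex \<Rightarrow> (complex \<Rightarrow> real) \<Rightarrow> nat \<Rightarrow> (nat \<Rightarrow> complex \<Rightarrow> complex) \<Rightarrow> bool" where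
  "killing w1 w2 mu k f = (tfield w1 w2 k f \<and> dsym mu k f = (\<lambda>j z. 0))"

definition irreducible_killing ::
  "complex \<Rightarrow> complex \<Rightarrow> (complex \<Rightarrow> real) \<Rightarrow> nat \<Rightarrow> (nat \<Rightarrow> complex \<Rightarrow> complex) \<Rightarrow> bool" where
  "irreducible_killing w1 w2 mu m f =
     (killing w1 w2 mu m f \<and>
      \<not> (\<exists>(n::nat) ku kv u v.
            (\<forall>i<n. 0 < ku i \<and> 0 < kv i \<and> ku i + kv i = m \<and>
                   killing w1 w2 mu (ku i) (u i) \<and> killing w1 w2 mu (kv i) (v i)) \<and>
            f = (\<lambda>j z. \<Sum>i<n. sprod (ku i) (kv i) (u i) (v i) j z)) \<and>
      (m = 2 \<longrightarrow> \<not> (\<exists>c::complex. f = (\<lambda>j z. c * metric_tensor mu j z))))"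

definition potential :: "complex \<Rightarrow> complex \<Rightarrow> (complex \<Rightarrow> real) \<Rightarrow> nat \<Rightarrow> (nat \<Rightarrow> complex \<Rightarrow> complex) \<Rightarrow> bool" where
  "potential w1 w2 mu k h =
     (if k = 0 then h = (\<lambda>j z. 0)
      else (\<exists>v. tfield w1 w2 (k - 1) v \<and> h = dsym mu (k - 1) v))"

text \<open>The trace free field Z^{k,c}, c = (c1,c2) a constant pseudovector of weight k+1.
  Z_0 = exp(2k mu)(c1 mu_x + c2 mu_y), Z_1 = exp(2k mu)(c2 mu_x - c1 mu_y), Z_{j+2} = - Z_j.\<close>
definition Zfield :: "(complex \<Rightarrow> real) \<Rightarrow> nat \<Rightarrow> complex \<Rightarrow> complex \<Rightarrow> nat \<Rightarrow> complex \<Rightarrow> complex" where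
  "Zfield mu k c1 c2 j z =
     (if j \<le> k then
        (-1) ^ (j div 2) * of_real (exp (2 * real k * mu z)) *
        (if even j then c1 * of_real (pdx mu z) + c2 * of_real (pdy mu z)
         else c2 * of_real (pdx mu z) - c1 * of_real (pdy mu z))
      else 0)"

end

theory Submission imports Defs "HOL-Complex_Analysis.Complex_Analysis" "HOL-Computational_Algebra.Polynomial"
begin

lemma pdx_eq: "(f has_derivative D) (at z) \<Longrightarrow> pdx f z = D 1"
  unfolding pdx_def using frechet_derivative_at by metis
lemma pdy_eq: "(f has_derivative D) (at z) \<Longrightarrow> pdy f z = D \<i>"
  unfolding pdy_def using frechet_derivative_at by metis

lemma Ck_Suc_imp: "Ck (Suc k) f \<Longrightarrow> Ck k f"
proof (induction k arbitrary: f)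
  case 0 then show ?case by (simp add: differentiable_imp_continuous_on)
next
  case (Suc k)
  have "f differentiable_on UNIV" "Ck (Suc k) (pdx f)" "Ck (Suc k) (pdy f)"
    using Ck.simps(2)[of "Suc k" f] Suc.prems by blast+
  then show ?case using Suc.IH Ck.simps(2)[of k f] by blast
qed


lemma smooth_diff: "smooth f \<Longrightarrow> (f has_derivative frechet_derivative f (at z)) (at z)"
  unfolding smooth_def by (metis Ck.simps(2) UNIV_I differentiable_on_def frechet_derivative_works
      differentiable_at_withinI at_within_open open_UNIV)

lemma smooth_differentiable: "smooth f \<Longrightarrow> f differentiable (at z)"
  using smooth_diff differentiableI by blast

lemma smooth_pdx: "smooth f \<Longrightarrow> smooth (pdx f)"
  unfolding smooth_def by (metis Ck.simps(2))
lemma smooth_pdy: "smooth f \<Longrightarrow> smooth (pdy f)"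
  unfolding smooth_def by (metis Ck.simps(2))
lemma smooth_cont: "smooth f \<Longrightarrow> continuous_on UNIV f"
  unfolding smooth_def by (metis Ck.simps(1))

lemma Ck_diff: "Ck (Suc k) f \<Longrightarrow> (f has_derivative frechet_derivative f (at z)) (at z)"
  by (metis Ck.simps(2) UNIV_I differentiable_on_def frechet_derivative_works
      differentiable_at_withinI at_within_open open_UNIV)

lemma Ck_const: "Ck k (\<lambda>z. c)"
proof (induction k arbitrary: c)
  case 0 then show ?case by simp
next
  case (Suc k)
  have "pdx (\<lambda>z. c) = (\<lambda>z. 0)" "pdy (\<lambda>z. c) = (\<lambda>z. 0)"
    by (auto simp: pdx_eq[OF has_derivative_const] pdy_eq[OF has_derivative_const])
  then show ?case using Suc by simp
qed

lemma Ck_add: "Ck k f \<Longrightarrow> Ck k g \<Longrightarrow> Ck k (\<lambda>z. f z + g z)"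
proof (induction k arbitrary: f g)
  case 0 then show ?case by (auto intro: continuous_intros)
next
  case (Suc k)
  have "pdx (\<lambda>z. f z + g z) = (\<lambda>z. pdx f z + pdx g z)"
    using pdx_eq[OF has_derivative_add[OF Ck_diff[OF Suc.prems(1)] Ck_diff[OF Suc.prems(2)]]]
    unfolding pdx_def by auto
  moreover have "pdy (\<lambda>z. f z + g z) = (\<lambda>z. pdy f z + pdy g z)"
    using pdy_eq[OF has_derivative_add[OF Ck_diff[OF Suc.prems(1)] Ck_diff[OF Suc.prems(2)]]]
    unfolding pdy_def by auto
  ultimately show ?case using Suc by (auto intro: differentiable_on_add)
qed

lemma Ck_mult: fixes f g :: "complex \<Rightarrow> 'a::real_normed_algebra"
  shows "Ck k f \<Longrightarrow> Ck k g \<Longrightarrow> Ck k (\<lambda>z. f z * g z)"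
proof (induction k arbitrary: f g)
  case 0 then show ?case by (auto intro: continuous_intros)
next
  case (Suc k)
  have d: "((\<lambda>z. f z * g z) has_derivative (\<lambda>h. f z * frechet_derivative g (at z) h + frechet_derivative f (at z) h * g z)) (at z)" for z
    using has_derivative_mult[OF Ck_diff[OF Suc.prems(1)] Ck_diff[OF Suc.prems(2)]] by simp
  have "pdx (\<lambda>z. f z * g z) = (\<lambda>z. f z * pdx g z + pdx f z * g z)"
    using pdx_eq[OF d] unfolding pdx_def by auto
  moreover have "pdy (\<lambda>z. f z * g z) = (\<lambda>z. f z * pdy g z + pdy f z * g z)"
    using pdy_eq[OF d] unfolding pdy_def by auto
  moreover have "Ck k f" "Ck k g" using Suc.prems Ck_Suc_imp by blast+
  ultimately show ?case using Suc by (auto intro!: Ck_add differentiable_on_mult)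
qed

lemma Ck_linear: assumes bl: "bounded_linear L"
  shows "Ck k f \<Longrightarrow> Ck k (\<lambda>z. L (f z))"
proof (induction k arbitrary: f)
  case 0 then show ?case using bl by (simp add: bounded_linear.continuous_on)
next
  case (Suc k)
  have d: "((\<lambda>z. L (f z)) has_derivative (\<lambda>h. L (frechet_derivative f (at z) h))) (at z)" for z
    using bounded_linear.has_derivative[OF bl Ck_diff[OF Suc.prems(1)]] by simp
  have "pdx (\<lambda>z. L (f z)) = (\<lambda>z. L (pdx f z))"
    using pdx_eq[OF d] unfolding pdx_def by auto
  moreover have "pdy (\<lambda>z. L (f z)) = (\<lambda>z. L (pdy f z))"
    using pdy_eq[OF d] unfolding pdy_def by auto
  moreover have "(\<lambda>z. L (f z)) differentiable_on UNIV"
    using d differentiable_on_def differentiableI by blast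
  ultimately show ?case using Suc by auto
qed

lemma Ck_exp: fixes h :: "complex \<Rightarrow> real"
  shows "smooth h \<Longrightarrow> Ck k (\<lambda>z. exp (h z))"
proof (induction k)
  case 0 then show ?case by (intro Ck.simps(1)[THEN iffD2] continuous_on_exp smooth_cont)
next
  case (Suc k)
  have d: "((\<lambda>z. exp (h z)) has_derivative (\<lambda>v. exp (h z) * frechet_derivative h (at z) v)) (at z)" for z
    using has_derivative_exp[OF smooth_diff[OF Suc.prems]] by (simp add: mult.commute)
  have "pdx (\<lambda>z. exp (h z)) = (\<lambda>z. exp (h z) * pdx h z)"
    using pdx_eq[OF d] unfolding pdx_def by auto
  moreover have "pdy (\<lambda>z. exp (h z)) = (\<lambda>z. exp (h z) * pdy h z)"
    using pdy_eq[OF d] unfolding pdy_def by auto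
  moreover have "(\<lambda>z. exp (h z)) differentiable_on UNIV"
    using d differentiable_on_def differentiableI by blast
  moreover have "Ck k (pdx h)" "Ck k (pdy h)" using Suc.prems smooth_pdx smooth_pdy smooth_def by blast+
  moreover have "Ck k (\<lambda>z. exp (h z))" using Suc by blast
  ultimately show ?case using Ck_mult[of k "\<lambda>z. exp (h z)" "pdx h"] Ck_mult[of k "\<lambda>z. exp (h z)" "pdy h"]
    by simp
qed

lemma smooth_const: "smooth (\<lambda>z. c)" by (simp add: smooth_def Ck_const)
lemma smooth_add: "smooth f \<Longrightarrow> smooth g \<Longrightarrow> smooth (\<lambda>z. f z + g z)"
  by (simp add: smooth_def Ck_add)
lemma smooth_mult: fixes f g :: "complex \<Rightarrow> 'a::real_normed_algebra"
  shows "smooth f \<Longrightarrow> smooth g \<Longrightarrow> smooth (\<lambda>z. f z * g z)"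
  by (simp add: smooth_def Ck_mult)
lemma smooth_linear: "bounded_linear L \<Longrightarrow> smooth f \<Longrightarrow> smooth (\<lambda>z. L (f z))"
  by (simp add: smooth_def Ck_linear)
lemma smooth_exp: fixes h :: "complex \<Rightarrow> real" shows "smooth h \<Longrightarrow> smooth (\<lambda>z. exp (h z))"
  by (simp add: smooth_def Ck_exp)
lemma smooth_of_real: fixes h :: "complex \<Rightarrow> real" shows "smooth h \<Longrightarrow> smooth (\<lambda>z. complex_of_real (h z))"
  using smooth_linear[OF bounded_linear_of_real] by blast
lemma smooth_cnj: "smooth h \<Longrightarrow> smooth (\<lambda>z. cnj (h z))"
  using smooth_linear[OF bounded_linear_cnj] by blast
lemma smooth_minus: "smooth f \<Longrightarrow> smooth (\<lambda>z. - f z)"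
  using smooth_linear[OF bounded_linear_minus[OF bounded_linear_ident]] by blast
lemma smooth_diff': "smooth f \<Longrightarrow> smooth g \<Longrightarrow> smooth (\<lambda>z. f z - g z)"
  using smooth_add[OF _ smooth_minus] by (simp add: )
lemma smooth_sum: "finite S \<Longrightarrow> (\<And>i. i \<in> S \<Longrightarrow> smooth (f i)) \<Longrightarrow> smooth (\<lambda>z. \<Sum>i\<in>S. f i z)"
  by (induction S rule: finite_induct) (auto intro: smooth_add smooth_const)

definition tp :: "nat \<Rightarrow> (nat \<Rightarrow> complex \<Rightarrow> complex) \<Rightarrow> complex \<Rightarrow> complex poly" where
  "tp k f z = (\<Sum>j\<le>k. monom (of_nat (k choose j) * f j z) j)"

lemma coeff_tp: "coeff (tp k f z) n = (if n \<le> k then of_nat (k choose n) * f n z else 0)"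
  unfolding tp_def by (simp add: coeff_sum coeff_monom)

lemma poly_tp: "poly (tp k f z) t = (\<Sum>j\<le>k. of_nat (k choose j) * f j z * t ^ j)"
  unfolding tp_def by (simp add: poly_sum poly_monom)

lemma tp_eq_iff: "tp k f z = tp k g z \<longleftrightarrow> (\<forall>j\<le>k. f j z = g j z)"
proof
  assume "tp k f z = tp k g z"
  then have "coeff (tp k f z) j = coeff (tp k g z) j" for j by simp
  then show "\<forall>j\<le>k. f j z = g j z"
  proof (intro allI impI)
    fix j assume j: "j \<le> k" and h: "\<And>j. coeff (tp k f z) j = coeff (tp k g z) j"
    have "of_nat (k choose j) * f j z = of_nat (k choose j) * g j z" using h[of j] j by (simp add: coeff_tp)
    moreover have "(of_nat (k choose j) :: complex) \<noteq> 0" using j by simp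
    ultimately show "f j z = g j z" by simp
  qed
next
  assume "\<forall>j\<le>k. f j z = g j z" then show "tp k f z = tp k g z"
    by (intro poly_eqI) (simp add: coeff_tp)
qed

lemma tp_add: "tp k (\<lambda>j z. f j z + g j z) z = tp k f z + tp k g z"
  by (rule poly_eqI) (simp add: coeff_tp algebra_simps)
lemma tp_diff: "tp k (\<lambda>j z. f j z - g j z) z = tp k f z - tp k g z"
  by (rule poly_eqI) (simp add: coeff_tp algebra_simps)
lemma tp_cmult: "tp k (\<lambda>j z. c z * f j z) z = smult (c z) (tp k f z)"
  by (rule poly_eqI) (simp add: coeff_tp algebra_simps)
lemma tp_sum: "tp k (\<lambda>j z. \<Sum>i<n. F i j z) z = (\<Sum>i<n. tp k (F i) z)"
  by (rule poly_eqI) (simp add: coeff_tp coeff_sum sum_distrib_left)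

lemma tp_LA: "tp k (\<lambda>j z. of_nat (k - j) * f j z) z = smult (of_nat k) (tp (k - 1) f z)"
proof (rule poly_eqI)
  fix n
  have "of_nat (k choose n) * (of_nat (k - n) :: complex) = of_nat k * of_nat ((k - 1) choose n)"
    using binomial_absorb_comp[of k n] by (metis of_nat_mult mult.commute)
  then show "coeff (tp k (\<lambda>j z. of_nat (k - j) * f j z) z) n = coeff (smult (of_nat k) (tp (k - 1) f z)) n"
    by (cases "n \<le> k - 1"; cases "n \<le> k") (auto simp: coeff_tp mult.assoc[symmetric] binomial_eq_0)
qed

lemma tp_LC: "tp k (\<lambda>j z. of_nat j * f (j - 1) z) z = smult (of_nat k) (pCons 0 (tp (k - 1) f z))"
proof (rule poly_eqI)
  fix n
  show "coeff (tp k (\<lambda>j z. of_nat j * f (j - 1) z) z) n = coeff (smult (of_nat k) (pCons 0 (tp (k - 1) f z))) n"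
  proof (cases n)
    case 0 then show ?thesis by (simp add: coeff_tp)
  next
    case (Suc n')
    have "of_nat (k choose Suc n') * (of_nat (Suc n') :: complex) = of_nat k * of_nat ((k - 1) choose n')"
      using binomial_absorption[of n' k] by (metis of_nat_mult mult.commute)
    then show ?thesis using Suc
      by (cases "n' \<le> k - 1"; cases "Suc n' \<le> k") (auto simp: coeff_tp mult.assoc[symmetric] binomial_eq_0)
  qed
qed

lemma tp_LD: "tp k (\<lambda>j z. of_nat j * f j z) z = smult (of_nat k) (pCons 0 (tp (k - 1) (\<lambda>j. f (j + 1)) z))"
proof (rule poly_eqI)
  fix n
  show "coeff (tp k (\<lambda>j z. of_nat j * f j z) z) n = coeff (smult (of_nat k) (pCons 0 (tp (k - 1) (\<lambda>j. f (j + 1)) z))) n"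
  proof (cases n)
    case 0 then show ?thesis by (simp add: coeff_tp)
  next
    case (Suc n')
    have "of_nat (k choose Suc n') * (of_nat (Suc n') :: complex) = of_nat k * of_nat ((k - 1) choose n')"
      using binomial_absorption[of n' k] by (metis of_nat_mult mult.commute)
    then show ?thesis using Suc
      by (cases "n' \<le> k - 1"; cases "Suc n' \<le> k") (auto simp: coeff_tp mult.assoc[symmetric] binomial_eq_0)
  qed
qed

lemma tp_pderiv: "pderiv (tp k f z) = smult (of_nat k) (tp (k - 1) (\<lambda>j. f (j + 1)) z)"
proof (rule poly_eqI)
  fix n
  have "of_nat (k choose Suc n) * (of_nat (Suc n) :: complex) = of_nat k * of_nat ((k - 1) choose n)"
    using binomial_absorption[of n k] by (metis of_nat_mult mult.commute)
  then show "coeff (pderiv (tp k f z)) n = coeff (smult (of_nat k) (tp (k - 1) (\<lambda>j. f (j + 1)) z)) n"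
    by (cases "n \<le> k - 1"; cases "Suc n \<le> k") (auto simp: coeff_tp coeff_pderiv mult.assoc[symmetric] binomial_eq_0 mult.commute mult.left_commute)
qed

lemma tp_euler: "1 \<le> k \<Longrightarrow> tp k f z = tp (k - 1) f z + pCons 0 (tp (k - 1) (\<lambda>j. f (j + 1)) z)"
proof (rule poly_eqI)
  fix n assume k: "1 \<le> k"
  show "coeff (tp k f z) n = coeff (tp (k - 1) f z + pCons 0 (tp (k - 1) (\<lambda>j. f (j + 1)) z)) n"
  proof (cases n)
    case 0 then show ?thesis by (simp add: coeff_tp)
  next
    case (Suc n')
    have "(k choose (Suc n')) = ((k - 1) choose (Suc n')) + ((k - 1) choose n')"
    proof -
      obtain k' where "k = Suc k'" using k by (cases k) auto
      then show ?thesis by simp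
    qed
    then show ?thesis using Suc k
      by (cases "Suc n' \<le> k - 1"; cases "Suc n' \<le> k") (auto simp: coeff_tp distrib_right binomial_eq_0)
  qed
qed

lemma tp_dsym: "tp (k + 1) (dsym mu k f) z = tp k (nab mu k f 1) z + pCons 0 (tp k (nab mu k f 2) z)"
proof (rule poly_eqI)
  fix n
  show "coeff (tp (k + 1) (dsym mu k f) z) n = coeff (tp k (nab mu k f 1) z + pCons 0 (tp k (nab mu k f 2) z)) n"
  proof (cases n)
    case 0
    have "(1 + of_nat k :: complex) \<noteq> 0" by (metis add.commute of_nat_Suc of_nat_neq_0)
    then show ?thesis using 0 by (simp add: coeff_tp dsym_def)
  next
    case (Suc n')
    have e1: "of_nat (Suc k choose Suc n') * of_nat (Suc k - Suc n') / (of_nat (Suc k) :: complex) = of_nat (k choose Suc n')"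
    proof -
      have "(Suc k - Suc n') * (Suc k choose Suc n') = Suc k * (k choose Suc n')"
        using binomial_absorb_comp[of "Suc k" "Suc n'"] by simp
      then have "of_nat (Suc k choose Suc n') * of_nat (Suc k - Suc n') = (of_nat (Suc k) :: complex) * of_nat (k choose Suc n')"
        by (metis of_nat_mult mult.commute)
      then show ?thesis by (simp add: field_simps del: of_nat_Suc)
    qed
    have e2: "of_nat (Suc k choose Suc n') * of_nat (Suc n') / (of_nat (Suc k) :: complex) = of_nat (k choose n')"
    proof -
      have "Suc n' * (Suc k choose Suc n') = Suc k * (k choose n')"
        using binomial_absorption[of n' "Suc k"] by simp
      then have "of_nat (Suc k choose Suc n') * of_nat (Suc n') = (of_nat (Suc k) :: complex) * of_nat (k choose n')"
        by (metis of_nat_mult mult.commute)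
      then show ?thesis by (simp add: field_simps del: of_nat_Suc)
    qed
    show ?thesis
    proof (cases "n' \<le> k")
      case True
      have "coeff (tp (k + 1) (dsym mu k f) z) n =
         of_nat (Suc k choose Suc n') * (of_nat (Suc k - Suc n') * nab mu k f 1 (Suc n') z + of_nat (Suc n') * nab mu k f 2 n' z) / of_nat (Suc k)"
        using True Suc by (simp add: coeff_tp dsym_def)
      also have "\<dots> = (of_nat (Suc k choose Suc n') * of_nat (Suc k - Suc n') / of_nat (Suc k)) * nab mu k f 1 (Suc n') z
          + (of_nat (Suc k choose Suc n') * of_nat (Suc n') / of_nat (Suc k)) * nab mu k f 2 n' z"
        by (simp add: field_simps del: of_nat_Suc)
      also have "\<dots> = of_nat (k choose Suc n') * nab mu k f 1 (Suc n') z + of_nat (k choose n') * nab mu k f 2 n' z"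
        by (simp only: e1 e2)
      finally show ?thesis using Suc True by (auto simp: coeff_tp binomial_eq_0)
    next
      case False then show ?thesis using Suc by (simp add: coeff_tp)
    qed
  qed
qed

lemma pdx_poly_tp: assumes "\<forall>j\<le>k. smooth (f j)"
  shows "pdx (\<lambda>z. poly (tp k f z) t) z = poly (tp k (\<lambda>j. pdx (f j)) z) t"
    and "pdy (\<lambda>z. poly (tp k f z) t) z = poly (tp k (\<lambda>j. pdy (f j)) z) t"
proof -
  have d: "((\<lambda>z. \<Sum>j\<le>k. of_nat (k choose j) * f j z * t ^ j) has_derivative
      (\<lambda>h. \<Sum>j\<le>k. of_nat (k choose j) * frechet_derivative (f j) (at z) h * t ^ j)) (at z)"
    by (intro has_derivative_sum has_derivative_mult_right has_derivative_mult_left smooth_diff)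
       (use assms in auto)
  show "pdx (\<lambda>z. poly (tp k f z) t) z = poly (tp k (\<lambda>j. pdx (f j)) z) t"
    unfolding poly_tp using pdx_eq[OF d] by (simp add: pdx_def)
  show "pdy (\<lambda>z. poly (tp k f z) t) z = poly (tp k (\<lambda>j. pdy (f j)) z) t"
    unfolding poly_tp using pdy_eq[OF d] by (simp add: pdy_def)
qed

lemma tp_nab: "tp k (nab mu k f i) z = tp k (\<lambda>j. pd (f j) i) z
   - smult (of_nat k) (smult (of_real (chr mu 1 i 1 z)) (tp (k - 1) f z) + smult (of_real (chr mu 2 i 1 z)) (tp (k - 1) (\<lambda>j. f (j + 1)) z))
   - smult (of_nat k) (pCons 0 (smult (of_real (chr mu 1 i 2 z)) (tp (k - 1) f z) + smult (of_real (chr mu 2 i 2 z)) (tp (k - 1) (\<lambda>j. f (j + 1)) z)))"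
proof -
  define a where "a = (\<lambda>z. complex_of_real (chr mu 1 i 1 z))"
  define b where "b = (\<lambda>z. complex_of_real (chr mu 2 i 1 z))"
  define c where "c = (\<lambda>z. complex_of_real (chr mu 1 i 2 z))"
  define d where "d = (\<lambda>z. complex_of_real (chr mu 2 i 2 z))"
  have nab: "nab mu k f i = (\<lambda>j z. pd (f j) i z - of_nat (k - j) * (a z * f j z + b z * f (j + 1) z)
       - of_nat j * ((\<lambda>j z. c z * f j z + d z * f (j + 1) z) (j - 1) z))"
  proof (intro ext)
    fix j z show "nab mu k f i j z = pd (f j) i z - of_nat (k - j) * (a z * f j z + b z * f (j + 1) z)
       - of_nat j * ((\<lambda>j z. c z * f j z + d z * f (j + 1) z) (j - 1) z)"
      by (cases j) (simp_all add: nab_def a_def b_def c_def d_def)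
  qed
  have "tp k (nab mu k f i) z = tp k (\<lambda>j. pd (f j) i) z
      - tp k (\<lambda>j z. of_nat (k - j) * (a z * f j z + b z * f (j + 1) z)) z
      - tp k (\<lambda>j z. of_nat j * ((\<lambda>j z. c z * f j z + d z * f (j + 1) z) (j - 1) z)) z"
    unfolding nab by (simp only: tp_diff)
  also have "tp k (\<lambda>j z. of_nat (k - j) * (a z * f j z + b z * f (j + 1) z)) z
      = smult (of_nat k) (smult (a z) (tp (k - 1) f z) + smult (b z) (tp (k - 1) (\<lambda>j. f (j + 1)) z))"
    using tp_LA[of k "\<lambda>j z. a z * f j z + b z * f (j + 1) z" z]
    by (simp add: tp_add tp_cmult)
  also have "tp k (\<lambda>j z. of_nat j * ((\<lambda>j z. c z * f j z + d z * f (j + 1) z) (j - 1) z)) z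
      = smult (of_nat k) (pCons 0 (smult (c z) (tp (k - 1) f z) + smult (d z) (tp (k - 1) (\<lambda>j. f (j + 1)) z)))"
    using tp_LC[of k "\<lambda>j z. c z * f j z + d z * f (j + 1) z" z]
    by (simp add: tp_add tp_cmult)
  finally show ?thesis by (simp add: a_def b_def c_def d_def)
qed

lemma kP1: "of_nat k * poly (tp (k - 1) f z) t = of_nat k * poly (tp k f z) t - t * poly (pderiv (tp k f z)) t"
proof (cases "k = 0")
  case True then show ?thesis by (simp add: tp_pderiv)
next
  case False
  have "poly (tp k f z) t = poly (tp (k - 1) f z) t + t * poly (tp (k - 1) (\<lambda>j. f (j + 1)) z) t"
    using tp_euler[of k f z] False by simp
  then show ?thesis by (simp add: tp_pderiv algebra_simps)
qed
lemma kP2: "of_nat k * poly (tp (k - 1) (\<lambda>j. f (j + 1)) z) t = poly (pderiv (tp k f z)) t"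
  by (simp add: tp_pderiv)

lemma Dform: assumes "\<forall>j\<le>k. smooth (f j)"
  shows "poly (tp (k + 1) (dsym mu k f) z) t =
     pdx (\<lambda>z. poly (tp k f z) t) z + t * pdy (\<lambda>z. poly (tp k f z) t) z
     - of_nat k * (of_real (pdx mu z) * (1 - t^2) + 2 * t * of_real (pdy mu z)) * poly (tp k f z) t
     - (1 + t^2) * (t * of_real (pdx mu z) - of_real (pdy mu z)) * poly (pderiv (tp k f z)) t"
proof -
  define P where "P = poly (tp k f z) t"
  define Pd where "Pd = poly (pderiv (tp k f z)) t"
  define P1 where "P1 = poly (tp (k - 1) f z) t"
  define P2 where "P2 = poly (tp (k - 1) (\<lambda>j. f (j + 1)) z) t"
  define mx where "mx = complex_of_real (pdx mu z)"
  define my where "my = complex_of_real (pdy mu z)"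
  have e1: "of_nat k * P1 = of_nat k * P - t * Pd" unfolding P1_def P_def Pd_def by (rule kP1)
  have e2: "of_nat k * P2 = Pd" unfolding P2_def Pd_def by (rule kP2)
  have c: "complex_of_real (chr mu 1 1 1 z) = mx" "complex_of_real (chr mu 2 1 1 z) = - my"
     "complex_of_real (chr mu 1 1 2 z) = my" "complex_of_real (chr mu 2 1 2 z) = mx"
     "complex_of_real (chr mu 1 2 1 z) = my" "complex_of_real (chr mu 2 2 1 z) = mx"
     "complex_of_real (chr mu 1 2 2 z) = - mx" "complex_of_real (chr mu 2 2 2 z) = my"
    by (simp_all add: chr_def pd_def mx_def my_def)
  have pd1: "tp k (\<lambda>j. pd (f j) 1) z = tp k (\<lambda>j. pdx (f j)) z" by (simp add: pd_def)
  have pd2: "tp k (\<lambda>j. pd (f j) 2) z = tp k (\<lambda>j. pdy (f j)) z" by (simp add: pd_def)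
  have "poly (tp (k + 1) (dsym mu k f) z) t =
     poly (tp k (\<lambda>j. pdx (f j)) z) t - (mx * (of_nat k * P1) - my * (of_nat k * P2)) - t * (my * (of_nat k * P1) + mx * (of_nat k * P2))
     + t * (poly (tp k (\<lambda>j. pdy (f j)) z) t - (my * (of_nat k * P1) + mx * (of_nat k * P2)) - t * (- mx * (of_nat k * P1) + my * (of_nat k * P2)))"
    unfolding tp_dsym tp_nab pd1 pd2 c P1_def P2_def by (simp add: algebra_simps)
  also have "\<dots> = poly (tp k (\<lambda>j. pdx (f j)) z) t + t * poly (tp k (\<lambda>j. pdy (f j)) z) t
     - of_nat k * (mx * (1 - t^2) + 2 * t * my) * P - (1 + t^2) * (t * mx - my) * Pd"
    unfolding e1 e2 by (simp add: algebra_simps power2_eq_square)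
  finally show ?thesis using pdx_poly_tp[OF assms] by (simp add: P_def Pd_def mx_def my_def)
qed

lemma triple_sum:
  assumes "finite N" "finite A" "finite B" "\<And>a b. a \<in> A \<Longrightarrow> b \<in> B \<Longrightarrow> a + b \<in> N"
  shows "(\<Sum>n\<in>N. \<Sum>a\<in>A. \<Sum>b\<in>B. if a + b = n then f a b else (0::'c::comm_monoid_add)) = (\<Sum>a\<in>A. \<Sum>b\<in>B. f a b)"
proof -
  have "(\<Sum>n\<in>N. \<Sum>a\<in>A. \<Sum>b\<in>B. if a + b = n then f a b else 0) = (\<Sum>a\<in>A. \<Sum>n\<in>N. \<Sum>b\<in>B. if a + b = n then f a b else 0)"
    by (rule sum.swap)
  also have "\<dots> = (\<Sum>a\<in>A. \<Sum>b\<in>B. \<Sum>n\<in>N. if a + b = n then f a b else 0)"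
    by (rule sum.cong[OF refl], rule sum.swap)
  also have "\<dots> = (\<Sum>a\<in>A. \<Sum>b\<in>B. f a b)"
    using assms by (intro sum.cong refl) (simp add: sum.delta)
  finally show ?thesis .
qed

lemma tp_sprod: "tp (k + l) (sprod k l u v) z = tp k u z * tp l v z"
proof -
  have "poly (tp (k + l) (sprod k l u v) z) t = poly (tp k u z * tp l v z) t" for t
  proof -
    have "poly (tp (k + l) (sprod k l u v) z) t = (\<Sum>n\<le>k+l. \<Sum>a\<le>k. \<Sum>b\<le>l.
          if a + b = n then of_nat (k choose a) * of_nat (l choose b) * u a z * v b z * t ^ (a + b) else 0)"
      unfolding poly_tp sprod_def
      by (intro sum.cong refl) (auto simp: sum_distrib_right intro!: sum.cong)
    also have "\<dots> = (\<Sum>a\<le>k. \<Sum>b\<le>l. of_nat (k choose a) * of_nat (l choose b) * u a z * v b z * t ^ (a + b))"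
      by (rule triple_sum) auto
    also have "\<dots> = poly (tp k u z * tp l v z) t"
      unfolding poly_mult poly_tp sum_product by (intro sum.cong refl) (simp add: power_add algebra_simps)
    finally show ?thesis .
  qed
  then show ?thesis by (simp add: poly_eq_poly_eq_iff[symmetric] fun_eq_iff)
qed

lemma poly_tp_metric: "poly (tp 2 (metric_tensor mu) z) t = of_real (exp (2 * mu z)) * (1 + t^2)"
  by (simp add: poly_tp metric_tensor_def numeral_2_eq_2 algebra_simps)

lemma poly_pderiv_tp_metric: "poly (pderiv (tp 2 (metric_tensor mu) z)) t = 2 * of_real (exp (2 * mu z)) * t"
  by (simp add: tp_pderiv poly_tp metric_tensor_def numeral_2_eq_2 algebra_simps)

lemma tp_uv: assumes "\<forall>j\<le>k. h j z = \<gamma> * (- \<i>) ^ j + \<delta> * \<i> ^ j"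
  shows "poly (tp k h z) t = \<gamma> * (1 - \<i> * t) ^ k + \<delta> * (1 + \<i> * t) ^ k"
proof -
  have "(1 - \<i> * t) ^ k = ((- \<i>) * t + 1) ^ k" by simp
  also have "\<dots> = (\<Sum>j\<le>k. of_nat (k choose j) * ((- \<i>) * t) ^ j * 1 ^ (k - j))" by (rule binomial_ring)
  also have "\<dots> = (\<Sum>j\<le>k. of_nat (k choose j) * ((- \<i>) ^ j * t ^ j))"
    by (simp only: power_mult_distrib power_one mult_1_right)
  finally have 1: "(1 - \<i> * t) ^ k = (\<Sum>j\<le>k. of_nat (k choose j) * ((- \<i>) ^ j * t ^ j))" .
  have "(1 + \<i> * t) ^ k = (\<i> * t + 1) ^ k" by (simp add: add.commute)
  also have "\<dots> = (\<Sum>j\<le>k. of_nat (k choose j) * (\<i> * t) ^ j * 1 ^ (k - j))" by (rule binomial_ring)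
  also have "\<dots> = (\<Sum>j\<le>k. of_nat (k choose j) * (\<i> ^ j * t ^ j))"
    by (simp only: power_mult_distrib power_one mult_1_right)
  finally have 2: "(1 + \<i> * t) ^ k = (\<Sum>j\<le>k. of_nat (k choose j) * (\<i> ^ j * t ^ j))" .
  show ?thesis unfolding 1 2 poly_tp sum_distrib_left sum.distrib[symmetric]
    using assms by (intro sum.cong refl) (simp add: algebra_simps)
qed

lemma alg_even0: "(c1 + \<i> * c2) * (x - \<i> * y) + (c1 - \<i> * c2) * (x + \<i> * y) = 2 * (c1 * x + c2 * y)"
  by (simp add: complex_eq_iff algebra_simps)
lemma alg_odd0: "(c1 + \<i> * c2) * (x - \<i> * y) * (- \<i>) + (c1 - \<i> * c2) * (x + \<i> * y) * \<i> = 2 * (c2 * x - c1 * y)"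
  by (simp add: complex_eq_iff algebra_simps)
lemma aux1: "(e::complex) / 2 * a * b + e / 2 * c * d = e / 2 * (a * b + c * d)" by (simp add: algebra_simps)
lemma aux2: "((e::complex) / 2 * a * b) * u + (e / 2 * c * d) * v = e / 2 * (a * b * u + c * d * v)" by (simp add: algebra_simps)
lemma alg_even: "(e / 2 * (c1 + \<i> * c2) * (x - \<i> * y)) + (e / 2 * (c1 - \<i> * c2) * (x + \<i> * y)) = e * (c1 * x + c2 * y)"
proof -
  have "(e / 2 * (c1 + \<i> * c2) * (x - \<i> * y)) + (e / 2 * (c1 - \<i> * c2) * (x + \<i> * y))
     = e / 2 * ((c1 + \<i> * c2) * (x - \<i> * y) + (c1 - \<i> * c2) * (x + \<i> * y))" by (rule aux1)
  also have "\<dots> = e / 2 * (2 * (c1 * x + c2 * y))" by (simp only: alg_even0)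
  also have "\<dots> = e * (c1 * x + c2 * y)" by simp
  finally show ?thesis .
qed
lemma alg_odd: "(e / 2 * (c1 + \<i> * c2) * (x - \<i> * y)) * (- \<i>) + (e / 2 * (c1 - \<i> * c2) * (x + \<i> * y)) * \<i> = e * (c2 * x - c1 * y)"
proof -
  have "(e / 2 * (c1 + \<i> * c2) * (x - \<i> * y)) * (- \<i>) + (e / 2 * (c1 - \<i> * c2) * (x + \<i> * y)) * \<i>
     = e / 2 * ((c1 + \<i> * c2) * (x - \<i> * y) * (- \<i>) + (c1 - \<i> * c2) * (x + \<i> * y) * \<i>)" by (rule aux2)
  also have "\<dots> = e / 2 * (2 * (c2 * x - c1 * y))" by (simp only: alg_odd0)
  also have "\<dots> = e * (c2 * x - c1 * y)" by simp
  finally show ?thesis .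
qed

lemma Zfield_uv:
  "Zfield mu k c1 c2 j z = (if j \<le> k then
      (of_real (exp (2 * real k * mu z)) / 2 * (c1 + \<i> * c2) * (of_real (pdx mu z) - \<i> * of_real (pdy mu z))) * (- \<i>) ^ j
    + (of_real (exp (2 * real k * mu z)) / 2 * (c1 - \<i> * c2) * (of_real (pdx mu z) + \<i> * of_real (pdy mu z))) * \<i> ^ j
    else 0)"
proof (cases "j \<le> k")
  case False then show ?thesis by (simp add: Zfield_def)
next
  case True
  define e where "e = complex_of_real (exp (2 * real k * mu z))"
  define x where "x = complex_of_real (pdx mu z)"
  define y where "y = complex_of_real (pdy mu z)"
  define \<gamma> where "\<gamma> = e / 2 * (c1 + \<i> * c2) * (x - \<i> * y)"
  define \<delta> where "\<delta> = e / 2 * (c1 - \<i> * c2) * (x + \<i> * y)"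
  obtain q where q: "j = 2 * q \<or> j = 2 * q + 1"
    by (cases "even j") (metis even_two_times_div_two, metis odd_two_times_div_two_succ)
  have "\<gamma> * (- \<i>) ^ j + \<delta> * \<i> ^ j = Zfield mu k c1 c2 j z"
    using q
  proof
    assume j: "j = 2 * q"
    have "(- \<i>) ^ j = (-1) ^ q" "\<i> ^ j = (-1) ^ q" using j by (simp_all add: power_mult)
    then have "\<gamma> * (- \<i>) ^ j + \<delta> * \<i> ^ j = (-1) ^ q * (\<gamma> + \<delta>)" by (simp add: algebra_simps)
    also have "\<dots> = (-1) ^ q * (e * (c1 * x + c2 * y))" unfolding \<gamma>_def \<delta>_def alg_even ..
    finally show ?thesis using True j by (simp add: Zfield_def e_def x_def y_def)
  next
    assume j: "j = 2 * q + 1"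
    have "(- \<i>) ^ j = (-1) ^ q * (- \<i>)" "\<i> ^ j = (-1) ^ q * \<i>" using j by (simp_all add: power_mult power_add)
    then have "\<gamma> * (- \<i>) ^ j + \<delta> * \<i> ^ j = (-1) ^ q * (\<gamma> * (- \<i>) + \<delta> * \<i>)" by (simp add: algebra_simps)
    also have "\<dots> = (-1) ^ q * (e * (c2 * x - c1 * y))" unfolding \<gamma>_def \<delta>_def alg_odd ..
    finally show ?thesis using True j by (simp add: Zfield_def e_def x_def y_def)
  qed
  then show ?thesis using True by (simp add: \<gamma>_def \<delta>_def e_def x_def y_def)
qed

lemma pdx_mult_at: fixes f g :: "complex \<Rightarrow> complex"
  assumes "f differentiable (at z)" "g differentiable (at z)"
  shows "pdx (\<lambda>z. f z * g z) z = f z * pdx g z + pdx f z * g z"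
    and "pdy (\<lambda>z. f z * g z) z = f z * pdy g z + pdy f z * g z"
proof -
  have d: "((\<lambda>z. f z * g z) has_derivative (\<lambda>h. f z * frechet_derivative g (at z) h + frechet_derivative f (at z) h * g z)) (at z)"
    using has_derivative_mult[OF assms(1)[unfolded frechet_derivative_works] assms(2)[unfolded frechet_derivative_works]] .
  show "pdx (\<lambda>z. f z * g z) z = f z * pdx g z + pdx f z * g z" using pdx_eq[OF d] by (simp add: pdx_def)
  show "pdy (\<lambda>z. f z * g z) z = f z * pdy g z + pdy f z * g z" using pdy_eq[OF d] by (simp add: pdy_def)
qed

lemma pdx_cmult: fixes f :: "complex \<Rightarrow> complex"
  assumes "f differentiable (at z)"
  shows "pdx (\<lambda>z. c * f z) z = c * pdx f z" and "pdy (\<lambda>z. c * f z) z = c * pdy f z"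
  using pdx_mult_at(1)[of "\<lambda>z. c" z f] pdx_mult_at(2)[of "\<lambda>z. c" z f] assms
  by (auto simp: pdx_eq[OF has_derivative_const] pdy_eq[OF has_derivative_const])

lemma E_deriv: assumes "smooth mu"
  shows "((\<lambda>z. complex_of_real (exp (c * mu z))) has_derivative
          (\<lambda>h. complex_of_real (exp (c * mu z) * (c * frechet_derivative mu (at z) h)))) (at z)"
proof -
  have "((\<lambda>z. exp (c * mu z)) has_derivative (\<lambda>h. exp (c * mu z) * (c * frechet_derivative mu (at z) h))) (at z)"
    using has_derivative_exp[OF has_derivative_mult_right[OF smooth_diff[OF assms]]] by (simp add: mult.commute)
  from bounded_linear.has_derivative[OF bounded_linear_of_real this] show ?thesis .
qed

lemma pdx_E: assumes "smooth mu"
  shows "pdx (\<lambda>z. complex_of_real (exp (c * mu z))) z = complex_of_real (exp (c * mu z)) * of_real c * of_real (pdx mu z)"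
    and "pdy (\<lambda>z. complex_of_real (exp (c * mu z))) z = complex_of_real (exp (c * mu z)) * of_real c * of_real (pdy mu z)"
  using pdx_eq[OF E_deriv[OF assms]] pdy_eq[OF E_deriv[OF assms]] by (simp_all add: pdx_def pdy_def)

lemma smooth_E: "smooth mu \<Longrightarrow> smooth (\<lambda>z. complex_of_real (exp (c * mu z)))"
  by (intro smooth_of_real smooth_exp smooth_mult[of "\<lambda>z. c", simplified] smooth_const) 

lemma smooth_differentiable_c: "smooth (f :: complex \<Rightarrow> complex) \<Longrightarrow> f differentiable (at z)"
  by (rule smooth_differentiable)

lemma smooth_poly_tp: "\<forall>j\<le>k. smooth (f j) \<Longrightarrow> smooth (\<lambda>z. poly (tp k f z) t)"
  unfolding poly_tp by (intro smooth_sum) (auto intro!: smooth_mult smooth_const)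

definition Aexp :: "(complex \<Rightarrow> real) \<Rightarrow> nat \<Rightarrow> complex \<Rightarrow> complex \<Rightarrow> nat \<Rightarrow> complex \<Rightarrow> complex" where
  "Aexp mu m \<alpha> \<beta> j z = (if j \<le> m then complex_of_real (exp (2 * real m * mu z)) * (\<alpha> * (- \<i>) ^ j + \<beta> * \<i> ^ j) else 0)"

lemma smooth_Aexp: "smooth mu \<Longrightarrow> smooth (Aexp mu m \<alpha> \<beta> j)"
  unfolding Aexp_def by (cases "j \<le> m") (auto intro!: smooth_mult smooth_E smooth_const)

lemma poly_tp_A: "poly (tp m (Aexp mu m \<alpha> \<beta>) z) t = complex_of_real (exp (2 * real m * mu z)) * (\<alpha> * (1 - \<i> * t) ^ m + \<beta> * (1 + \<i> * t) ^ m)"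
  by (subst tp_uv[of m _ z "complex_of_real (exp (2 * real m * mu z)) * \<alpha>" "complex_of_real (exp (2 * real m * mu z)) * \<beta>"])
     (auto simp: Aexp_def algebra_simps)

lemma pderiv_tp_A: assumes "1 \<le> m"
  shows "poly (pderiv (tp m (Aexp mu m \<alpha> \<beta>) z)) t = of_nat m * complex_of_real (exp (2 * real m * mu z)) *
     (- \<i> * \<alpha> * (1 - \<i> * t) ^ (m - 1) + \<i> * \<beta> * (1 + \<i> * t) ^ (m - 1))"
proof -
  have h1: "poly (tp (m - 1) (\<lambda>j. Aexp mu m \<alpha> \<beta> (j + 1)) z) t = 
      (complex_of_real (exp (2 * real m * mu z)) * (- \<i> * \<alpha>)) * (1 - \<i> * t) ^ (m - 1)
    + (complex_of_real (exp (2 * real m * mu z)) * (\<i> * \<beta>)) * (1 + \<i> * t) ^ (m - 1)"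
    by (rule tp_uv) (use assms in \<open>auto simp: Aexp_def algebra_simps\<close>)
  have h2: "poly (pderiv (tp m (Aexp mu m \<alpha> \<beta>) z)) t = of_nat m * poly (tp (m - 1) (\<lambda>j. Aexp mu m \<alpha> \<beta> (j + 1)) z) t"
    by (simp only: tp_pderiv poly_smult)
  show ?thesis unfolding h2 h1 by (simp add: algebra_simps)
qed

lemma alg_DA: fixes x y t \<alpha> \<beta> u v :: complex
  shows "(2 * x + 2 * t * y - (x * (1 - t^2) + 2 * t * y)) * (\<alpha> * ((1 - \<i> * t) * u) + \<beta> * ((1 + \<i> * t) * v))
     - (1 + t^2) * (t * x - y) * (- \<i> * \<alpha> * u + \<i> * \<beta> * v)
   = (1 + t^2) * (\<alpha> * (x - \<i> * y) * u + \<beta> * (x + \<i> * y) * v)"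
proof -
  have a: "x * (1 + t^2) * (1 - \<i> * t) + (1 + t^2) * (t * x - y) * \<i> = (1 + t^2) * (x - \<i> * y)"
    by (simp add: algebra_simps)
  have b: "x * (1 + t^2) * (1 + \<i> * t) - (1 + t^2) * (t * x - y) * \<i> = (1 + t^2) * (x + \<i> * y)"
    by (simp add: algebra_simps)
  have c: "2 * x + 2 * t * y - (x * (1 - t^2) + 2 * t * y) = x * (1 + t^2)"
    by (simp add: algebra_simps)
  have "(x * (1 + t^2)) * (\<alpha> * ((1 - \<i> * t) * u) + \<beta> * ((1 + \<i> * t) * v))
     - (1 + t^2) * (t * x - y) * (- \<i> * \<alpha> * u + \<i> * \<beta> * v)
     = \<alpha> * u * (x * (1 + t^2) * (1 - \<i> * t) + (1 + t^2) * (t * x - y) * \<i>)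
     + \<beta> * v * (x * (1 + t^2) * (1 + \<i> * t) - (1 + t^2) * (t * x - y) * \<i>)"
    by (simp add: algebra_simps)
  then show ?thesis unfolding c a b by (simp add: algebra_simps)
qed

lemma DA: assumes mu: "smooth mu" and m: "1 \<le> m"
  shows "poly (tp (m + 1) (dsym mu m (Aexp mu m \<alpha> \<beta>)) z) t =
     complex_of_real (exp (2 * mu z)) * (1 + t^2) *
     poly (tp (m - 1) (Zfield mu (m - 1) (of_nat m * (\<alpha> + \<beta>)) (- \<i> * of_nat m * (\<alpha> - \<beta>))) z) t"
proof -
  define E where "E = complex_of_real (exp (2 * real m * mu z))"
  define x where "x = complex_of_real (pdx mu z)"
  define y where "y = complex_of_real (pdy mu z)"
  define u where "u = (1 - \<i> * t) ^ (m - 1)"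
  define v where "v = (1 + \<i> * t) ^ (m - 1)"
  define U where "U = \<alpha> * (1 - \<i> * t) ^ m + \<beta> * (1 + \<i> * t) ^ m"
  have Uuv: "U = \<alpha> * ((1 - \<i> * t) * u) + \<beta> * ((1 + \<i> * t) * v)"
  proof -
    obtain m' where "m = Suc m'" using m by (cases m) auto
    then show ?thesis unfolding U_def u_def v_def by simp
  qed
  have fn_eq: "(\<lambda>z. poly (tp m (Aexp mu m \<alpha> \<beta>) z) t) = (\<lambda>z. complex_of_real (exp ((2 * real m) * mu z)) * U)"
    by (simp add: poly_tp_A U_def)
  have dE: "(\<lambda>z. complex_of_real (exp ((2 * real m) * mu z))) differentiable (at z)"
    by (rule smooth_differentiable[OF smooth_E[OF mu]])
  have Px: "pdx (\<lambda>z. poly (tp m (Aexp mu m \<alpha> \<beta>) z) t) z = E * (2 * of_nat m * x) * U"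
    unfolding fn_eq using pdx_mult_at(1)[OF dE, of "\<lambda>z. U"] pdx_E(1)[OF mu, of "2 * real m" z]
    by (simp add: pdx_eq[OF has_derivative_const] E_def x_def)
  have Py: "pdy (\<lambda>z. poly (tp m (Aexp mu m \<alpha> \<beta>) z) t) z = E * (2 * of_nat m * y) * U"
    unfolding fn_eq using pdx_mult_at(2)[OF dE, of "\<lambda>z. U"] pdx_E(2)[OF mu, of "2 * real m" z]
    by (simp add: pdy_eq[OF has_derivative_const] E_def y_def)
  have P: "poly (tp m (Aexp mu m \<alpha> \<beta>) z) t = E * U" by (simp add: poly_tp_A U_def E_def)
  have Pd: "poly (pderiv (tp m (Aexp mu m \<alpha> \<beta>) z)) t = of_nat m * E * (- \<i> * \<alpha> * u + \<i> * \<beta> * v)"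
    using pderiv_tp_A[OF m] by (simp add: E_def u_def v_def)
  have sm: "\<forall>j\<le>m. smooth (Aexp mu m \<alpha> \<beta> j)" using smooth_Aexp[OF mu] by blast
  have "poly (tp (m + 1) (dsym mu m (Aexp mu m \<alpha> \<beta>)) z) t =
      E * (2 * of_nat m * x) * U + t * (E * (2 * of_nat m * y) * U) - of_nat m * (x * (1 - t^2) + 2 * t * y) * (E * U)
      - (1 + t^2) * (t * x - y) * (of_nat m * E * (- \<i> * \<alpha> * u + \<i> * \<beta> * v))"
    unfolding Dform[OF sm] Px Py P Pd x_def y_def ..
  also have "\<dots> = E * of_nat m * ((2 * x + 2 * t * y - (x * (1 - t^2) + 2 * t * y)) * U
      - (1 + t^2) * (t * x - y) * (- \<i> * \<alpha> * u + \<i> * \<beta> * v))"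
    by (simp add: algebra_simps)
  also have "\<dots> = E * of_nat m * ((1 + t^2) * (\<alpha> * (x - \<i> * y) * u + \<beta> * (x + \<i> * y) * v))"
    unfolding Uuv alg_DA ..
  finally have L: "poly (tp (m + 1) (dsym mu m (Aexp mu m \<alpha> \<beta>)) z) t =
      E * of_nat m * ((1 + t^2) * (\<alpha> * (x - \<i> * y) * u + \<beta> * (x + \<i> * y) * v))" .
  define e' where "e' = complex_of_real (exp (2 * real (m - 1) * mu z))"
  have ee: "complex_of_real (exp (2 * mu z)) * e' = E"
  proof -
    have "2 * mu z + 2 * real (m - 1) * mu z = 2 * real m * mu z" using m by (simp add: of_nat_diff algebra_simps)
    then show ?thesis unfolding e'_def E_def by (metis exp_add of_real_mult)
  qed
  have c1: "of_nat m * (\<alpha> + \<beta>) + \<i> * (- \<i> * of_nat m * (\<alpha> - \<beta>)) = 2 * of_nat m * \<alpha>"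
    by (simp add: algebra_simps)
  have c2: "of_nat m * (\<alpha> + \<beta>) - \<i> * (- \<i> * of_nat m * (\<alpha> - \<beta>)) = 2 * of_nat m * \<beta>"
    by (simp add: algebra_simps)
  have R: "poly (tp (m - 1) (Zfield mu (m - 1) (of_nat m * (\<alpha> + \<beta>)) (- \<i> * of_nat m * (\<alpha> - \<beta>))) z) t =
     (e' / 2 * (2 * of_nat m * \<alpha>) * (x - \<i> * y)) * u + (e' / 2 * (2 * of_nat m * \<beta>) * (x + \<i> * y)) * v"
    unfolding u_def v_def
  proof (rule tp_uv, intro allI impI)
    fix j assume j: "j \<le> m - 1"
    show "Zfield mu (m - 1) (of_nat m * (\<alpha> + \<beta>)) (- \<i> * of_nat m * (\<alpha> - \<beta>)) j z =
       e' / 2 * (2 * of_nat m * \<alpha>) * (x - \<i> * y) * (- \<i>) ^ j + e' / 2 * (2 * of_nat m * \<beta>) * (x + \<i> * y) * \<i> ^ j"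
      by (simp only: Zfield_uv if_P[OF j] c1 c2 e'_def x_def y_def)
  qed
  show ?thesis unfolding L R ee[symmetric] by (simp add: algebra_simps)
qed

lemma smooth_metric: "smooth mu \<Longrightarrow> smooth (metric_tensor mu j)"
  unfolding metric_tensor_def by (cases "j = 0 \<or> j = 2") (auto intro!: smooth_E[of mu 2, simplified] smooth_const)

lemma smooth_if: "(P \<Longrightarrow> smooth f) \<Longrightarrow> smooth (\<lambda>z. if P then f z else 0)"
  by (cases P) (auto simp: smooth_const)

lemma smooth_sprod: assumes "\<forall>a\<le>k. smooth (u a)" "\<forall>b\<le>l. smooth (v b)"
  shows "smooth (sprod k l u v j)"
proof (cases "j \<le> k + l")
  case True
  have e: "sprod k l u v j = (\<lambda>z. (\<Sum>a\<le>k. \<Sum>b\<le>l. if a + b = j then of_nat (k choose a) * of_nat (l choose b) * u a z * v b z else 0)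
     * (1 / of_nat ((k + l) choose j)))"
    using True by (simp add: sprod_def fun_eq_iff)
  show ?thesis unfolding e using assms
    by (intro smooth_mult smooth_const smooth_sum) (auto intro!: smooth_if smooth_mult smooth_const)
next
  case False
  have "sprod k l u v j = (\<lambda>z. 0)" using False by (simp add: sprod_def fun_eq_iff)
  then show ?thesis by (simp add: smooth_const)
qed

lemma D_metric: assumes mu: "smooth mu"
  shows "poly (tp (2 + 1) (dsym mu 2 (metric_tensor mu)) z) t = 0"
proof -
  define E where "E = complex_of_real (exp (2 * mu z))"
  define x where "x = complex_of_real (pdx mu z)"
  define y where "y = complex_of_real (pdy mu z)"
  have fn_eq: "(\<lambda>z. poly (tp 2 (metric_tensor mu) z) t) = (\<lambda>z. complex_of_real (exp (2 * mu z)) * (1 + t^2))"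
    by (simp add: poly_tp_metric)
  have dE: "(\<lambda>z. complex_of_real (exp (2 * mu z))) differentiable (at z)"
    by (rule smooth_differentiable[OF smooth_E[OF mu]])
  have Px: "pdx (\<lambda>z. poly (tp 2 (metric_tensor mu) z) t) z = E * (2 * x) * (1 + t^2)"
    unfolding fn_eq using pdx_mult_at(1)[OF dE, of "\<lambda>z. 1 + t^2"] pdx_E(1)[OF mu, of "2" z]
    by (simp add: pdx_eq[OF has_derivative_const] E_def x_def)
  have Py: "pdy (\<lambda>z. poly (tp 2 (metric_tensor mu) z) t) z = E * (2 * y) * (1 + t^2)"
    unfolding fn_eq using pdx_mult_at(2)[OF dE, of "\<lambda>z. 1 + t^2"] pdx_E(2)[OF mu, of "2" z]
    by (simp add: pdy_eq[OF has_derivative_const] E_def y_def)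
  have sm: "\<forall>j\<le>2. smooth (metric_tensor mu j)" using smooth_metric[OF mu] by blast
  have "poly (tp (2 + 1) (dsym mu 2 (metric_tensor mu)) z) t =
     E * (2 * x) * (1 + t^2) + t * (E * (2 * y) * (1 + t^2)) - of_nat 2 * (x * (1 - t^2) + 2 * t * y) * (E * (1 + t^2))
     - (1 + t^2) * (t * x - y) * (2 * E * t)"
    unfolding Dform[OF sm] Px Py unfolding poly_tp_metric poly_pderiv_tp_metric E_def x_def y_def ..
  also have "\<dots> = 0" by (simp add: algebra_simps power2_eq_square)
  finally show ?thesis .
qed

lemma D_G: assumes mu: "smooth mu" and sQ: "\<forall>j\<le>k. smooth (Q j)"
  shows "poly (tp (k + 2 + 1) (dsym mu (k + 2) (sprod 2 k (metric_tensor mu) Q)) z) t =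
     complex_of_real (exp (2 * mu z)) * (1 + t^2) * poly (tp (k + 1) (dsym mu k Q) z) t"
proof -
  define E where "E = complex_of_real (exp (2 * mu z))"
  define x where "x = complex_of_real (pdx mu z)"
  define y where "y = complex_of_real (pdy mu z)"
  define PQ where "PQ = (\<lambda>z. poly (tp k Q z) t)"
  define G where "G = sprod 2 k (metric_tensor mu) Q"
  have tpG: "tp (k + 2) G z = tp 2 (metric_tensor mu) z * tp k Q z" for z
    using tp_sprod[of 2 k "metric_tensor mu" Q z] by (simp add: G_def add.commute)
  have fn_eq: "(\<lambda>z. poly (tp (k + 2) G z) t) = (\<lambda>z. complex_of_real (exp (2 * mu z)) * ((1 + t^2) * PQ z))"
    by (simp only: tpG poly_mult poly_tp_metric PQ_def mult.assoc)
  have dE: "(\<lambda>z. complex_of_real (exp (2 * mu z))) differentiable (at z)"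
    by (rule smooth_differentiable[OF smooth_E[OF mu]])
  have dQ: "PQ differentiable (at z)" unfolding PQ_def by (rule smooth_differentiable[OF smooth_poly_tp[OF sQ]])
  have dQ': "(\<lambda>z. (1 + t^2) * PQ z) differentiable (at z)" unfolding PQ_def
    by (rule smooth_differentiable[OF smooth_mult[OF smooth_const smooth_poly_tp[OF sQ]]])
  have Px: "pdx (\<lambda>z. poly (tp (k + 2) G z) t) z = E * ((1 + t^2) * pdx PQ z) + E * (2 * x) * ((1 + t^2) * PQ z)"
    unfolding fn_eq pdx_mult_at(1)[OF dE dQ'] pdx_cmult(1)[OF dQ] pdx_E(1)[OF mu]
    by (simp add: E_def x_def)
  have Py: "pdy (\<lambda>z. poly (tp (k + 2) G z) t) z = E * ((1 + t^2) * pdy PQ z) + E * (2 * y) * ((1 + t^2) * PQ z)"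
    unfolding fn_eq pdx_mult_at(2)[OF dE dQ'] pdx_cmult(2)[OF dQ] pdx_E(2)[OF mu]
    by (simp add: E_def y_def)
  have P: "poly (tp (k + 2) G z) t = E * (1 + t^2) * PQ z"
    by (simp only: tpG poly_mult poly_tp_metric PQ_def E_def)
  have Pd: "poly (pderiv (tp (k + 2) G z)) t = E * (1 + t^2) * poly (pderiv (tp k Q z)) t + PQ z * (2 * E * t)"
    unfolding tpG pderiv_mult poly_add poly_mult poly_tp_metric poly_pderiv_tp_metric by (simp add: PQ_def E_def)
  have sG: "\<forall>j\<le>k + 2. smooth (G j)" unfolding G_def
    using smooth_sprod[of 2 "metric_tensor mu" k Q] smooth_metric[OF mu] sQ by blast
  have "poly (tp (k + 2 + 1) (dsym mu (k + 2) G) z) t =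
     (E * ((1 + t^2) * pdx PQ z) + E * (2 * x) * ((1 + t^2) * PQ z)) + t * (E * ((1 + t^2) * pdy PQ z) + E * (2 * y) * ((1 + t^2) * PQ z))
     - of_nat (k + 2) * (x * (1 - t^2) + 2 * t * y) * (E * (1 + t^2) * PQ z)
     - (1 + t^2) * (t * x - y) * (E * (1 + t^2) * poly (pderiv (tp k Q z)) t + PQ z * (2 * E * t))"
    unfolding Dform[OF sG] Px Py P Pd x_def y_def ..
  also have "\<dots> = E * (1 + t^2) * (pdx PQ z + t * pdy PQ z - of_nat k * (x * (1 - t^2) + 2 * t * y) * PQ z
       - (1 + t^2) * (t * x - y) * poly (pderiv (tp k Q z)) t)"
    by (simp add: algebra_simps power2_eq_square)
  also have "\<dots> = E * (1 + t^2) * poly (tp (k + 1) (dsym mu k Q) z) t"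
    unfolding Dform[OF sQ] PQ_def x_def y_def ..
  finally show ?thesis by (simp add: G_def E_def)
qed

lemma periodic_nat: assumes "\<And>z. f (z + w) = f z"
  shows "f (z + of_nat n * w) = f z"
proof (induction n arbitrary: z)
  case 0 then show ?case by simp
next
  case (Suc n)
  have "f (z + of_nat (Suc n) * w) = f ((z + of_nat n * w) + w)" by (simp add: algebra_simps)
  also have "\<dots> = f (z + of_nat n * w)" by (rule assms)
  finally show ?case using Suc by simp
qed

lemma periodic_int1: assumes "\<And>z. f (z + w) = f z"
  shows "f (z + of_int a * w) = f (z::complex)"
proof (cases "a \<ge> 0")
  case True
  define n where "n = nat a"
  have "a = int n" using True by (simp add: n_def)
  then show ?thesis using periodic_nat[of f w, OF assms] by simp
next
  case False
  define n where "n = nat (- a)"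
  have n: "a = - int n" using False by (simp add: n_def)
  have "f ((z - of_nat n * w) + of_nat n * w) = f (z - of_nat n * w)" by (rule periodic_nat[of f w, OF assms])
  then show ?thesis using n by simp
qed

lemma periodic_int: assumes "periodic w1 w2 f"
  shows "f (z + of_int a * w1 + of_int b * w2) = f z"
proof -
  have 1: "\<And>z. f (z + w1) = f z" and 2: "\<And>z. f (z + w2) = f z" using assms by (auto simp: periodic_def)
  have "f (z + of_int a * w1 + of_int b * w2) = f (z + of_int a * w1)" by (rule periodic_int1[of f w2, OF 2])
  also have "\<dots> = f z" by (rule periodic_int1[of f w1, OF 1])
  finally show ?thesis .
qed

lemma lattice_coords: assumes "is_lattice w1 w2"
  shows "z = of_real (Im (w2 * cnj z) / Im (w2 * cnj w1)) * w1 + of_real (- Im (w1 * cnj z) / Im (w2 * cnj w1)) * w2"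
proof -
  define D where "D = Im (w2 * cnj w1)"
  have D: "D \<noteq> 0" using assms by (simp add: is_lattice_def D_def)
  define a where "a = Im (w2 * cnj z)"
  define b where "b = - Im (w1 * cnj z)"
  have e: "of_real D * z = of_real a * w1 + of_real b * w2"
    by (simp add: complex_eq_iff D_def a_def b_def algebra_simps)
  have "of_real (a / D) * w1 + of_real (b / D) * w2 = (of_real a * w1 + of_real b * w2) / of_real D"
    using D by (simp add: field_simps)
  also have "\<dots> = z" unfolding e[symmetric] using D by simp
  finally show ?thesis by (simp add: a_def b_def D_def)
qed

lemma bounded_periodic: fixes f :: "complex \<Rightarrow> 'a::real_normed_vector"
  assumes lat: "is_lattice w1 w2" and cont: "continuous_on UNIV f" and per: "periodic w1 w2 f"
  shows "bounded (range f)"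
proof -
  define g where "g = (\<lambda>p::real \<times> real. of_real (fst p) * w1 + of_real (snd p) * w2)"
  define K where "K = g ` ({0..1} \<times> {0..1})"
  have "continuous_on UNIV g" unfolding g_def by (intro continuous_intros)
  then have cK: "compact K" unfolding K_def
    by (intro compact_continuous_image compact_Times compact_Icc) (auto intro: continuous_on_subset)
  then have "compact (f ` K)" by (intro compact_continuous_image continuous_on_subset[OF cont]) auto
  then have b: "bounded (f ` K)" by (rule compact_imp_bounded)
  have "range f \<subseteq> f ` K"
  proof
    fix y assume "y \<in> range f"
    then obtain z where y: "y = f z" by auto
    define s where "s = Im (w2 * cnj z) / Im (w2 * cnj w1)"
    define t where "t = - Im (w1 * cnj z) / Im (w2 * cnj w1)"
    have z: "z = of_real s * w1 + of_real t * w2" unfolding s_def t_def by (rule lattice_coords[OF lat])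
    define z' where "z' = z + of_int (- \<lfloor>s\<rfloor>) * w1 + of_int (- \<lfloor>t\<rfloor>) * w2"
    have "f z' = f z" unfolding z'_def by (rule periodic_int[OF per])
    moreover have "z' = g (s - of_int \<lfloor>s\<rfloor>, t - of_int \<lfloor>t\<rfloor>)"
      unfolding z'_def g_def z by (simp add: algebra_simps)
    moreover have "(s - of_int \<lfloor>s\<rfloor>, t - of_int \<lfloor>t\<rfloor>) \<in> {0..1} \<times> {0..1}"
    proof -
      have "s - of_int \<lfloor>s\<rfloor> < 1" "t - of_int \<lfloor>t\<rfloor> < 1"
        using real_of_int_floor_add_one_gt[of s] real_of_int_floor_add_one_gt[of t] by linarith+
      moreover have "0 \<le> s - of_int \<lfloor>s\<rfloor>" "0 \<le> t - of_int \<lfloor>t\<rfloor>"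
        using of_int_floor_le[of s] of_int_floor_le[of t] by linarith+
      ultimately show ?thesis by auto
    qed
    ultimately show "y \<in> f ` K" unfolding K_def y by (metis image_eqI)
  qed
  then show ?thesis using b bounded_subset by blast
qed

lemma linear_CR: fixes L :: "complex \<Rightarrow> complex"
  assumes "linear L" "L \<i> = \<i> * L 1"
  shows "L h = h * L 1"
proof -
  have hh: "h = Re h *\<^sub>R 1 + Im h *\<^sub>R \<i>" by (simp add: complex_eq_iff)
  have "L h = L (Re h *\<^sub>R 1 + Im h *\<^sub>R \<i>)" by (rule arg_cong[OF hh])
  also have "\<dots> = Re h *\<^sub>R L 1 + Im h *\<^sub>R L \<i>" using assms(1) by (simp add: linear_add linear_scale)
  also have "\<dots> = h * L 1" using assms(2) by (simp add: scaleR_conv_of_real complex_eq_iff algebra_simps)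
  finally show ?thesis .
qed

lemma holo_const: fixes \<psi> :: "complex \<Rightarrow> complex"
  assumes lat: "is_lattice w1 w2" and sm: "smooth \<psi>" and per: "periodic w1 w2 \<psi>"
    and CR: "\<And>z. pdx \<psi> z + \<i> * pdy \<psi> z = 0"
  shows "\<exists>b. \<forall>z. \<psi> z = b"
proof -
  have "\<psi> field_differentiable (at z)" for z
  proof -
    define L where "L = frechet_derivative \<psi> (at z)"
    have d: "(\<psi> has_derivative L) (at z)" unfolding L_def by (rule smooth_diff[OF sm])
    have lin: "linear L" using d has_derivative_linear by blast
    have "L \<i> = \<i> * L 1"
    proof -
      have "L 1 + \<i> * L \<i> = 0" using CR[of z] pdx_eq[OF d] pdy_eq[OF d] by simp
      then have "\<i> * L \<i> = - L 1" by (simp add: add_eq_0_iff)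
      then have "\<i> * (\<i> * L \<i>) = \<i> * (- L 1)" by simp
      then show ?thesis by simp
    qed
    then have LL: "L h = h * L 1" for h by (rule linear_CR[OF lin])
    have "L = (\<lambda>h. L 1 * h)"
    proof
      fix h show "L h = L 1 * h" using LL[of h] by (simp add: mult.commute)
    qed
    then have "(\<psi> has_field_derivative L 1) (at z)" using d by (simp add: has_field_derivative_def)
    then show ?thesis using field_differentiable_def by blast
  qed
  then have "\<psi> holomorphic_on UNIV" unfolding holomorphic_on_def using field_differentiable_at_within by blast
  moreover have "bounded (range \<psi>)" using bounded_periodic[OF lat smooth_cont[OF sm] per] .
  ultimately have "\<psi> constant_on UNIV" by (rule Liouville_theorem)
  then show ?thesis by (auto simp: constant_on_def)
qed

lemma zero_deriv_const: fixes h :: "complex \<Rightarrow> complex"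
  assumes sm: "smooth h" and z: "\<And>z. pdx h z = 0" "\<And>z. pdy h z = 0"
  shows "\<exists>c. \<forall>z. h z = c"
proof -
  have "(h has_derivative (\<lambda>v. 0)) (at z within UNIV)" for z
  proof -
    define L where "L = frechet_derivative h (at z)"
    have d: "(h has_derivative L) (at z)" unfolding L_def by (rule smooth_diff[OF sm])
    have lin: "linear L" using d has_derivative_linear by blast
    have L1: "L 1 = 0" and Li: "L \<i> = 0" using z[of z] pdx_eq[OF d] pdy_eq[OF d] by auto
    have LL: "L v = v * L 1" for v by (rule linear_CR[OF lin]) (simp add: L1 Li)
    have "L = (\<lambda>v. 0)"
    proof
      fix v show "L v = 0" using LL[of v] L1 by simp
    qed
    then show ?thesis using d by simp
  qed
  then show ?thesis using has_derivative_zero_constant[of UNIV h] by auto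
qed

lemma periodic_pdx: assumes sm: "smooth f" and per: "periodic w1 w2 f"
  shows "periodic w1 w2 (pdx f)" "periodic w1 w2 (pdy f)"
proof -
  have key: "frechet_derivative f (at (z + w)) = frechet_derivative f (at z)" if fw: "\<And>z. f (z + w) = f z" for z w
  proof -
    have "((\<lambda>x. x + w) has_derivative (\<lambda>h. h)) (at z)" by (intro derivative_eq_intros) auto
    from has_derivative_compose[OF this smooth_diff[OF sm, of "z + w"]]
    have "((\<lambda>x. f (x + w)) has_derivative frechet_derivative f (at (z + w))) (at z)" by simp
    then have "(f has_derivative frechet_derivative f (at (z + w))) (at z)" using fw by simp
    then show ?thesis using frechet_derivative_at by metis
  qed
  have "\<And>z. f (z + w1) = f z" "\<And>z. f (z + w2) = f z" using per by (auto simp: periodic_def)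
  then show "periodic w1 w2 (pdx f)" "periodic w1 w2 (pdy f)"
    using key by (auto simp: periodic_def pdx_def pdy_def)
qed

lemma tfield_smooth_all: "tfield w1 w2 k f \<Longrightarrow> smooth (f j)"
  unfolding tfield_def by (cases "j \<le> k") (auto simp: smooth_const)
lemma tfield_periodic_all: "tfield w1 w2 k f \<Longrightarrow> periodic w1 w2 (f j)"
  unfolding tfield_def by (cases "j \<le> k") (auto simp: periodic_def)

lemma periodic_sprod: assumes "\<forall>a. periodic w1 w2 (u a)" "\<forall>b. periodic w1 w2 (v b)"
  shows "periodic w1 w2 (sprod k l u v j)"
proof -
  have 1: "\<And>a z. u a (z + w1) = u a z" "\<And>a z. u a (z + w2) = u a z"
    "\<And>b z. v b (z + w1) = v b z" "\<And>b z. v b (z + w2) = v b z"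
    using assms by (auto simp: periodic_def)
  have 2: "sprod k l u v j (z + w) = sprod k l u v j z"
    if "\<And>a. u a (z + w) = u a z" "\<And>b. v b (z + w) = v b z" for z w
    unfolding sprod_def using that by (intro if_cong refl arg_cong2[where f = "(/)"] sum.cong) auto
  show ?thesis unfolding periodic_def using 2 1 by blast
qed

lemma tfield_sprod: assumes "tfield w1 w2 k u" "tfield w1 w2 l v"
  shows "tfield w1 w2 (k + l) (sprod k l u v)"
  unfolding tfield_def
proof (intro conjI allI impI)
  fix j
  show "smooth (sprod k l u v j)" using assms by (intro smooth_sprod) (auto intro: tfield_smooth_all)
  show "periodic w1 w2 (sprod k l u v j)" using assms by (intro periodic_sprod) (auto intro: tfield_periodic_all)
next
  fix j assume "k + l < j" then show "sprod k l u v j = (\<lambda>z. 0)" by (simp add: sprod_def fun_eq_iff)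
qed

lemma periodic_E: "periodic w1 w2 mu \<Longrightarrow> periodic w1 w2 (\<lambda>z. complex_of_real (exp (c * mu z)))"
  by (simp add: periodic_def)

lemma tfield_metric: assumes "smooth mu" "periodic w1 w2 mu"
  shows "tfield w1 w2 2 (metric_tensor mu)"
  using assms smooth_metric[OF assms(1)] unfolding tfield_def
  by (auto simp: metric_tensor_def periodic_def fun_eq_iff)

lemma tfield_Aexp: assumes "smooth mu" "periodic w1 w2 mu"
  shows "tfield w1 w2 m (Aexp mu m \<alpha> \<beta>)"
  using assms smooth_Aexp[OF assms(1)] unfolding tfield_def
  by (auto simp: Aexp_def periodic_def fun_eq_iff)

lemma tfield_add: "tfield w1 w2 k f \<Longrightarrow> tfield w1 w2 k h \<Longrightarrow> tfield w1 w2 k (\<lambda>j z. f j z + h j z)"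
  unfolding tfield_def by (auto intro: smooth_add simp: periodic_def)

lemma pd_add: assumes "smooth f" "smooth h"
  shows "pd (\<lambda>z. f z + h z) i z = pd f i z + pd h i z"
proof -
  have d: "((\<lambda>z. f z + h z) has_derivative (\<lambda>v. frechet_derivative f (at z) v + frechet_derivative h (at z) v)) (at z)"
    by (intro has_derivative_add smooth_diff assms)
  show ?thesis using pdx_eq[OF d] pdy_eq[OF d] by (simp add: pd_def pdx_def pdy_def)
qed

lemma nab_add: assumes "\<forall>j. smooth (f j)" "\<forall>j. smooth (h j)"
  shows "nab mu k (\<lambda>j z. f j z + h j z) i j z = nab mu k f i j z + nab mu k h i j z"
  unfolding nab_def using pd_add[of "f j" "h j" i z] assms by (simp add: algebra_simps)

lemma dsym_add: assumes "\<forall>j. smooth (f j)" "\<forall>j. smooth (h j)"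
  shows "dsym mu k (\<lambda>j z. f j z + h j z) = (\<lambda>j z. dsym mu k f j z + dsym mu k h j z)"
  by (simp add: fun_eq_iff dsym_def nab_add[OF assms] distrib_left add_divide_distrib)

lemma tp_zero: assumes "\<forall>t. poly (tp k f z) t = 0" shows "\<forall>j\<le>k. f j z = 0"
proof -
  have "tp k f z = tp k (\<lambda>j z. 0) z"
    using assms by (simp add: poly_eq_poly_eq_iff[symmetric] fun_eq_iff poly_tp)
  then show ?thesis by (simp add: tp_eq_iff)
qed

lemma dsym_zero: assumes "\<And>z t. poly (tp (k + 1) (dsym mu k f) z) t = 0"
  shows "dsym mu k f = (\<lambda>j z. 0)"
proof (intro ext)
  fix j z
  show "dsym mu k f j z = 0"
  proof (cases "j \<le> k + 1")
    case True then show ?thesis using tp_zero[of "k + 1" "dsym mu k f" z] assms by blast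
  next
    case False then show ?thesis by (simp add: dsym_def)
  qed
qed

lemma killing_metric: assumes "smooth mu" "periodic w1 w2 mu"
  shows "killing w1 w2 mu 2 (metric_tensor mu)"
  unfolding killing_def using tfield_metric[OF assms] dsym_zero[of 2 mu "metric_tensor mu"] D_metric[OF assms(1)]
  by (simp add: numeral_3_eq_3)

lemma poly_A_i: assumes "1 \<le> m"
  shows "poly (tp m (Aexp mu m \<alpha> \<beta>) z) \<i> = complex_of_real (exp (2 * real m * mu z)) * \<alpha> * 2 ^ m"
    and "poly (tp m (Aexp mu m \<alpha> \<beta>) z) (- \<i>) = complex_of_real (exp (2 * real m * mu z)) * \<beta> * 2 ^ m"
  using assms by (simp_all add: poly_tp_A power_0_left)

lemma poly_metric_i: "poly (tp 2 (metric_tensor mu) z) \<i> = 0" "poly (tp 2 (metric_tensor mu) z) (- \<i>) = 0"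
  by (simp_all add: poly_tp_metric)

lemma poly_G_i: "poly (tp (k + 2) (sprod 2 k (metric_tensor mu) Q) z) \<i> = 0"
   "poly (tp (k + 2) (sprod 2 k (metric_tensor mu) Q) z) (- \<i>) = 0"
  using tp_sprod[of 2 k "metric_tensor mu" Q z] by (simp_all add: add.commute poly_metric_i)

lemma vanish:
  assumes H: "\<forall>k. 1 \<le> k \<and> k \<le> m - 1 \<longrightarrow> \<not> (\<exists>f. irreducible_killing w1 w2 mu k f)"
  shows "1 \<le> k \<Longrightarrow> k \<le> m - 1 \<Longrightarrow> killing w1 w2 mu k h \<Longrightarrow>
      poly (tp k h z) \<i> = 0 \<and> poly (tp k h z) (- \<i>) = 0"
proof (induction k arbitrary: h z rule: less_induct)
  case (less k)
  from H less.prems have "\<not> irreducible_killing w1 w2 mu k h" by blast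
  with less.prems(3) have "(\<exists>(n::nat) ku kv u v.
            (\<forall>i<n. 0 < ku i \<and> 0 < kv i \<and> ku i + kv i = k \<and>
                   killing w1 w2 mu (ku i) (u i) \<and> killing w1 w2 mu (kv i) (v i)) \<and>
            h = (\<lambda>j z. \<Sum>i<n. sprod (ku i) (kv i) (u i) (v i) j z)) \<or>
      (k = 2 \<and> (\<exists>c::complex. h = (\<lambda>j z. c * metric_tensor mu j z)))"
    unfolding irreducible_killing_def by blast
  then show ?case
  proof
    assume "\<exists>(n::nat) ku kv u v.
            (\<forall>i<n. 0 < ku i \<and> 0 < kv i \<and> ku i + kv i = k \<and>
                   killing w1 w2 mu (ku i) (u i) \<and> killing w1 w2 mu (kv i) (v i)) \<and>
            h = (\<lambda>j z. \<Sum>i<n. sprod (ku i) (kv i) (u i) (v i) j z)"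
    then show ?thesis
    proof (elim exE conjE)
    fix n ku kv u v
    assume hyp: "\<forall>i<n. 0 < ku i \<and> 0 < kv i \<and> ku i + kv i = k \<and>
                   killing w1 w2 mu (ku i) (u i) \<and> killing w1 w2 mu (kv i) (v i)"
      and h: "h = (\<lambda>j z. \<Sum>i<n. sprod (ku i) (kv i) (u i) (v i) j z)"
    have pt: "poly (tp k h z) t = (\<Sum>i<n. poly (tp (ku i) (u i) z) t * poly (tp (kv i) (v i) z) t)" for t
    proof -
      have "tp k h z = (\<Sum>i<n. tp k (sprod (ku i) (kv i) (u i) (v i)) z)"
        unfolding h by (rule tp_sum)
      also have "\<dots> = (\<Sum>i<n. tp (ku i) (u i) z * tp (kv i) (v i) z)"
        using hyp by (intro sum.cong refl) (metis lessThan_iff tp_sprod)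
      finally show ?thesis by (simp add: poly_sum)
    qed
    have iu: "poly (tp (ku i) (u i) z) \<i> = 0 \<and> poly (tp (ku i) (u i) z) (- \<i>) = 0" if "i < n" for i
      using hyp that less.prems by (intro less.IH) auto
    show ?thesis unfolding pt using iu by simp
    qed
  next
    assume "k = 2 \<and> (\<exists>c::complex. h = (\<lambda>j z. c * metric_tensor mu j z))"
    then obtain c where k: "k = 2" and h: "h = (\<lambda>j z. c * metric_tensor mu j z)" by blast
    have "tp k h z = smult c (tp 2 (metric_tensor mu) z)"
      unfolding h k using tp_cmult[of 2 "\<lambda>z. c" "metric_tensor mu" z] by simp
    then show ?thesis by (simp add: poly_metric_i)
  qed
qed

lemma real_conj: assumes "real_field f"
  shows "poly (tp k f z) (- \<i>) = cnj (poly (tp k f z) \<i>)"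
proof -
  have r: "cnj (f j z) = f j z" for j using assms unfolding real_field_def by (simp add: complex_eq_iff)
  show ?thesis by (simp add: poly_tp r)
qed

lemma Dform_i: assumes "\<forall>j\<le>k. smooth (f j)"
  shows "poly (tp (k + 1) (dsym mu k f) z) \<i> =
     pdx (\<lambda>z. poly (tp k f z) \<i>) z + \<i> * pdy (\<lambda>z. poly (tp k f z) \<i>) z
     - of_nat k * (2 * of_real (pdx mu z) + 2 * \<i> * of_real (pdy mu z)) * poly (tp k f z) \<i>"
  using Dform[OF assms, of mu z \<i>] by (simp add: power2_eq_square algebra_simps)

lemma top_const:
  assumes lat: "is_lattice w1 w2" and mu: "smooth mu" and pmu: "periodic w1 w2 mu"
    and K: "killing w1 w2 mu m f"
  shows "\<exists>b. \<forall>z. poly (tp m f z) \<i> = complex_of_real (exp (2 * real m * mu z)) * b"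
proof -
  have sf: "\<forall>j\<le>m. smooth (f j)" and pf: "\<forall>j. periodic w1 w2 (f j)"
    using K tfield_smooth_all tfield_periodic_all unfolding killing_def by blast+
  define P where "P = (\<lambda>z. poly (tp m f z) \<i>)"
  define Em where "Em = (\<lambda>z. complex_of_real (exp ((- 2 * real m) * mu z)))"
  define \<psi> where "\<psi> = (\<lambda>z. Em z * P z)"
  have sP: "smooth P" unfolding P_def by (rule smooth_poly_tp[OF sf])
  have sE: "smooth Em" unfolding Em_def by (rule smooth_E[OF mu])
  have "smooth \<psi>" unfolding \<psi>_def by (rule smooth_mult[OF sE sP])
  moreover have "periodic w1 w2 \<psi>" using pf pmu unfolding \<psi>_def Em_def P_def periodic_def by (simp add: poly_tp)
  moreover have "pdx \<psi> z + \<i> * pdy \<psi> z = 0" for z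
  proof -
    have D0: "poly (tp (m + 1) (dsym mu m f) z) \<i> = 0" using K by (simp add: killing_def tp_def)
    have "pdx \<psi> z + \<i> * pdy \<psi> z = Em z * (pdx P z + \<i> * pdy P z
            - of_nat m * (2 * of_real (pdx mu z) + 2 * \<i> * of_real (pdy mu z)) * P z)"
      unfolding \<psi>_def pdx_mult_at(1)[OF smooth_differentiable[OF sE] smooth_differentiable[OF sP]]
        pdx_mult_at(2)[OF smooth_differentiable[OF sE] smooth_differentiable[OF sP]]
      unfolding Em_def pdx_E[OF mu] by (simp add: algebra_simps)
    also have "\<dots> = 0" using D0 unfolding Dform_i[OF sf] P_def by simp
    finally show ?thesis .
  qed
  ultimately obtain b where b: "\<forall>z. \<psi> z = b" using holo_const[OF lat] by blast
  have "P z = complex_of_real (exp (2 * real m * mu z)) * b" for z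
  proof -
    have "complex_of_real (exp (2 * real m * mu z)) * Em z = 1"
      unfolding Em_def by (simp flip: of_real_mult exp_add)
    then have "P z = complex_of_real (exp (2 * real m * mu z)) * (Em z * P z)"
      by (metis mult.assoc mult_1)
    then show ?thesis using b unfolding \<psi>_def by simp
  qed
  then show ?thesis unfolding P_def by blast
qed

lemma d_factor: "[:- \<i>, 1:] * [:\<i>, 1:] = [:1, 0, 1::complex:]"
  by (simp add: mult_pCons_left)

lemma d_dvd: fixes p :: "complex poly" assumes "poly p \<i> = 0" "poly p (- \<i>) = 0"
  shows "[:1, 0, 1:] dvd p"
proof -
  from assms(1) have "[:- \<i>, 1:] dvd p" by (simp add: poly_eq_0_iff_dvd)
  then obtain p1 where p1: "p = [:- \<i>, 1:] * p1" by (erule dvdE)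
  have "poly p1 (- \<i>) = 0" using assms(2) p1 by simp
  then have "[:- (- \<i>), 1:] dvd p1" by (simp only: poly_eq_0_iff_dvd)
  then obtain p2 where p2: "p1 = [:\<i>, 1:] * p2" by (auto elim: dvdE)
  have "p = [:1, 0, 1:] * p2" unfolding p1 p2 d_factor[symmetric] by (simp only: mult.assoc)
  then show ?thesis by (rule dvdI)
qed

lemma coeff_d_mult: fixes q :: "complex poly" shows "coeff ([:1, 0, 1:] * q) n = coeff q n + (case n of 0 \<Rightarrow> 0 | Suc 0 \<Rightarrow> 0 | Suc (Suc n') \<Rightarrow> coeff q n')"
proof -
  have "[:1, 0, 1:] * q = q + pCons 0 (pCons 0 q)" by (simp add: mult_pCons_left)
  then show ?thesis by (cases n; cases "n - 1") (auto simp: coeff_pCons split: nat.split)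
qed

fun qrec :: "(nat \<Rightarrow> complex \<Rightarrow> complex) \<Rightarrow> nat \<Rightarrow> complex \<Rightarrow> complex" where
  "qrec c 0 z = c 0 z"
| "qrec c (Suc 0) z = c (Suc 0) z"
| "qrec c (Suc (Suc n)) z = c (Suc (Suc n)) z - qrec c n z"

lemma coeff_qrec: assumes "\<And>z. rr z = [:1, 0, 1:] * qq z"
  shows "coeff (qq z) n = qrec (\<lambda>n z. coeff (rr z) n) n z"
proof (induction n rule: less_induct)
  case (less n)
  show ?case
  proof (cases n)
    case 0 then show ?thesis using coeff_d_mult[of "qq z" 0] assms[of z] by simp
  next
    case (Suc n1)
    show ?thesis
    proof (cases n1)
      case 0 then show ?thesis using Suc coeff_d_mult[of "qq z" 1] assms[of z] by simp
    next
      case (Suc n2)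
      have "coeff (rr z) n = coeff (qq z) n + coeff (qq z) n2"
        using coeff_d_mult[of "qq z" n] assms[of z] \<open>n = Suc n1\<close> Suc by simp
      moreover have "coeff (qq z) n2 = qrec (\<lambda>n z. coeff (rr z) n) n2 z" using less \<open>n = Suc n1\<close> Suc by simp
      ultimately show ?thesis using \<open>n = Suc n1\<close> Suc by simp
    qed
  qed
qed

lemma smooth_qrec: "(\<And>n. smooth (c n)) \<Longrightarrow> smooth (qrec c n)"
proof (induction n rule: less_induct)
  case (less n)
  show ?case
  proof (cases n)
    case 0 then show ?thesis using less.prems by (simp add: fun_eq_iff[symmetric])
  next
    case (Suc n1)
    show ?thesis
    proof (cases n1)
      case 0 then show ?thesis using less.prems Suc by (simp add: fun_eq_iff[symmetric])
    next
      case (Suc n2)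
      have e: "qrec c n = (\<lambda>z. c n z - qrec c n2 z)" using \<open>n = Suc n1\<close> Suc by (simp add: fun_eq_iff)
      show ?thesis unfolding e using less \<open>n = Suc n1\<close> Suc by (intro smooth_diff') auto
    qed
  qed
qed

lemma periodic_qrec: "(\<And>n. periodic w1 w2 (c n)) \<Longrightarrow> periodic w1 w2 (qrec c n)"
proof (induction n rule: less_induct)
  case (less n)
  show ?case
  proof (cases n)
    case 0 then show ?thesis using less.prems by (simp add: periodic_def)
  next
    case (Suc n1)
    show ?thesis
    proof (cases n1)
      case 0 then show ?thesis using less.prems Suc by (simp add: periodic_def)
    next
      case (Suc n2)
      have "periodic w1 w2 (qrec c n2)" using less \<open>n = Suc n1\<close> Suc by simp
      then show ?thesis using less.prems[of n] \<open>n = Suc n1\<close> Suc by (simp add: periodic_def)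
    qed
  qed
qed

lemma degree_tp: "degree (tp k f z) \<le> k"
  by (rule degree_le) (simp add: coeff_tp)

lemma poly_zero_d: fixes p :: "complex poly" and c :: complex assumes "\<And>t. c * (1 + t^2) * poly p t = 0" "c \<noteq> 0"
  shows "p = 0"
proof -
  have e: "poly (smult c [:1, 0, 1:] * p) t = c * (1 + t^2) * poly p t" for t
    by (simp add: algebra_simps power2_eq_square)
  have "poly (smult c [:1, 0, 1:] * p) = poly 0" unfolding fun_eq_iff e using assms(1) by simp
  then have "smult c [:1, 0, 1:] * p = 0" by (simp only: poly_eq_poly_eq_iff)
  moreover have "smult c [:1, 0, 1:] \<noteq> 0" using assms(2) by simp
  ultimately show ?thesis using mult_eq_0_iff by blast
qed

lemma Zfield_neg: "Zfield mu k (- c1) (- c2) j z = - Zfield mu k c1 c2 j z"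
  by (simp add: Zfield_def algebra_simps)

lemma Zfield_zero: "Zfield mu k 0 0 = (\<lambda>j z. 0)"
  by (simp add: Zfield_def fun_eq_iff)

lemma tp_metric_poly: "tp 2 (metric_tensor mu) z = smult (complex_of_real (exp (2 * mu z))) [:1, 0, 1:]"
  by (simp add: poly_eq_poly_eq_iff[symmetric] fun_eq_iff poly_tp_metric algebra_simps power2_eq_square)

lemma exp_ne: "complex_of_real (exp x) \<noteq> 0" by simp

lemma tp_0: "tp 0 Q z = [:Q 0 z:]"
  by (simp add: tp_def monom_0)

lemma irr_decomp:
  fixes n :: nat and ku kv :: "nat \<Rightarrow> nat"
  assumes irr: "irreducible_killing w1 w2 mu m f"
    and h1: "\<forall>i<n. 0 < ku i \<and> 0 < kv i \<and> ku i + kv i = m \<and>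
                   killing w1 w2 mu (ku i) (u i) \<and> killing w1 w2 mu (kv i) (v i)"
    and h2: "f = (\<lambda>j z. \<Sum>i<n. sprod (ku i) (kv i) (u i) (v i) j z)"
  shows False
proof -
  have "\<exists>(n::nat) ku kv u v.
            (\<forall>i<n. 0 < ku i \<and> 0 < kv i \<and> ku i + kv i = m \<and>
                   killing w1 w2 mu (ku i) (u i) \<and> killing w1 w2 mu (kv i) (v i)) \<and>
            f = (\<lambda>j z. \<Sum>i<n. sprod (ku i) (kv i) (u i) (v i) j z)"
    apply (rule_tac x = n in exI)
    apply (rule_tac x = ku in exI)
    apply (rule_tac x = kv in exI)
    apply (rule_tac x = u in exI)
    apply (rule_tac x = v in exI)
    by (rule conjI[OF h1 h2])
  then show False using irr unfolding irreducible_killing_def by (elim conjE) (erule notE)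
qed

lemma irr_metric:
  assumes irr: "irreducible_killing w1 w2 mu 2 f" and h: "f = (\<lambda>j z. c * metric_tensor mu j z)"
  shows False
proof -
  have "\<exists>c::complex. f = (\<lambda>j z. c * metric_tensor mu j z)" using h by (rule exI)
  then show False using irr unfolding irreducible_killing_def by simp
qed

lemma dir1:
  assumes lat: "is_lattice w1 w2" and mu: "smooth mu" and pmu: "periodic w1 w2 mu" and m: "1 \<le> m"
    and fr: "real_field f" and irr: "irreducible_killing w1 w2 mu m f"
  shows "\<exists>c1 c2 :: real. (c1, c2) \<noteq> (0, 0) \<and>
           potential w1 w2 mu (m - 1) (Zfield mu (m - 1) (of_real c1) (of_real c2))"
proof -
  have K: "killing w1 w2 mu m f" using irr by (simp add: irreducible_killing_def)
  have tf: "tfield w1 w2 m f" using K by (simp add: killing_def)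
  have Df: "dsym mu m f = (\<lambda>j z. 0)" using K by (simp add: killing_def)
  have sf: "\<forall>j. smooth (f j)" using tf tfield_smooth_all by blast
  have pf: "\<forall>j. periodic w1 w2 (f j)" using tf tfield_periodic_all by blast
  have f0: "\<And>j z. m < j \<Longrightarrow> f j z = 0" using tf by (simp add: tfield_def)
  obtain b where b: "\<forall>z. poly (tp m f z) \<i> = complex_of_real (exp (2 * real m * mu z)) * b"
    using top_const[OF lat mu pmu K] by blast
  define \<alpha> where "\<alpha> = b / 2 ^ m"
  define \<beta> where "\<beta> = cnj \<alpha>"
  define A where "A = Aexp mu m \<alpha> \<beta>"
  have tA: "tfield w1 w2 m A" unfolding A_def by (rule tfield_Aexp[OF mu pmu])
  have sA: "\<forall>j. smooth (A j)" using tA tfield_smooth_all by blast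
  have Ai: "poly (tp m A z) \<i> = poly (tp m f z) \<i>" for z
    using poly_A_i(1)[OF m, of mu \<alpha> \<beta> z] b unfolding A_def \<alpha>_def by simp
  have Ami: "poly (tp m A z) (- \<i>) = poly (tp m f z) (- \<i>)" for z
  proof -
    have "poly (tp m f z) (- \<i>) = cnj (poly (tp m f z) \<i>)" by (rule real_conj[OF fr])
    also have "\<dots> = complex_of_real (exp (2 * real m * mu z)) * cnj b" using b by simp
    also have "\<dots> = poly (tp m A z) (- \<i>)" using poly_A_i(2)[OF m, of mu \<alpha> \<beta> z] unfolding A_def \<beta>_def \<alpha>_def by simp
    finally show ?thesis by simp
  qed
  define rr where "rr z = tp m f z - tp m A z" for z
  have dv: "[:1, 0, 1:] dvd rr z" for z unfolding rr_def by (rule d_dvd) (simp_all add: Ai Ami)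
  define qq where "qq z = rr z div [:1, 0, 1:]" for z
  have rq: "rr z = [:1, 0, 1:] * qq z" for z unfolding qq_def by (rule dvd_mult_div_cancel[OF dv[of z], symmetric])
  have degr: "degree (rr z) \<le> m" for z unfolding rr_def using degree_diff_le[OF degree_tp degree_tp] .
  have qdeg: "qq z = 0 \<or> degree (qq z) + 2 \<le> m" for z
  proof (cases "qq z = 0")
    case False
    then have "degree (rr z) = 2 + degree (qq z)" unfolding rq by (subst degree_mult_eq) simp_all
    then show ?thesis using degr[of z] by simp
  qed simp
  define C1 where "C1 = of_nat m * (\<alpha> + \<beta>)"
  define C2 where "C2 = - \<i> * of_nat m * (\<alpha> - \<beta>)"
  have DAf: "poly (tp (m + 1) (dsym mu m A) z) t = complex_of_real (exp (2 * mu z)) * (1 + t^2) *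
     poly (tp (m - 1) (Zfield mu (m - 1) C1 C2) z) t" for z t
    unfolding A_def C1_def C2_def by (rule DA[OF mu m])
  have C1r: "C1 = of_real (2 * real m * Re \<alpha>)" unfolding C1_def \<beta>_def by (simp add: complex_add_cnj)
  have C2r: "C2 = of_real (2 * real m * Im \<alpha>)" unfolding C2_def \<beta>_def by (simp add: complex_diff_cnj)
  have A0: "\<alpha> = 0 \<Longrightarrow> A = (\<lambda>j z. 0)" by (simp add: A_def \<beta>_def Aexp_def fun_eq_iff)
  have cne: "\<alpha> \<noteq> 0 \<Longrightarrow> (2 * real m * Re \<alpha>, 2 * real m * Im \<alpha>) \<noteq> (0, 0)"
    using m by (auto simp: complex_eq_iff)
  have cne': "\<alpha> \<noteq> 0 \<Longrightarrow> (- (2 * real m * Re \<alpha>), - (2 * real m * Im \<alpha>)) \<noteq> (0, 0)"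
    using m by (auto simp: complex_eq_iff)
  show ?thesis
  proof (cases "m = 1")
    case True
    have "qq z = 0" for z using qdeg[of z] True by simp
    then have tfA: "tp m f z = tp m A z" for z using rq[of z] unfolding rr_def by simp
    have fA: "f = A"
    proof (intro ext)
      fix j z show "f j z = A j z"
      proof (cases "j \<le> m")
        case True then show ?thesis using tfA[of z] by (simp add: tp_eq_iff)
      next
        case False then show ?thesis using f0[of j z] by (simp add: A_def Aexp_def)
      qed
    qed
    have Zz: "Zfield mu 0 C1 C2 = (\<lambda>j z. 0)"
    proof (intro ext)
      fix j z
      have "\<And>t. complex_of_real (exp (2 * mu z)) * (1 + t^2) * poly (tp 0 (Zfield mu 0 C1 C2) z) t = 0"
        using DAf[of z] Df fA True by (simp add: tp_def)
      then have "tp 0 (Zfield mu 0 C1 C2) z = 0" by (rule poly_zero_d) simp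
      then show "Zfield mu 0 C1 C2 j z = 0"
        by (cases "j = 0") (auto simp: tp_0 Zfield_def)
    qed
    show ?thesis
    proof (cases "\<alpha> = 0")
      case True
      then have h2: "f = (\<lambda>j z. \<Sum>i<(0::nat). sprod ((\<lambda>_. 1) i) ((\<lambda>_. 1) i) ((\<lambda>_. f) i) ((\<lambda>_. f) i) j z)" using fA A0 by simp
      have h1: "\<forall>i<(0::nat). 0 < (\<lambda>_. 1::nat) i \<and> 0 < (\<lambda>_. 1::nat) i \<and> (\<lambda>_. 1) i + (\<lambda>_. 1) i = m \<and>
                   killing w1 w2 mu ((\<lambda>_. 1) i) ((\<lambda>_. f) i) \<and> killing w1 w2 mu ((\<lambda>_. 1) i) ((\<lambda>_. f) i)" by simp
      have False by (rule irr_decomp[OF irr h1 h2])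
      then show ?thesis ..
    next
      case False
      have "potential w1 w2 mu (m - 1) (Zfield mu (m - 1) (of_real (2 * real m * Re \<alpha>)) (of_real (2 * real m * Im \<alpha>)))"
        using Zz True unfolding potential_def C1r C2r by simp
      then show ?thesis using cne[OF False] by blast
    qed
  next
    case False
    define k where "k = m - 2"
    have mk: "m = k + 2" using m False unfolding k_def by simp
    define cc where "cc n z = coeff (rr z) n" for n z
    have cc_eq: "cc n = (\<lambda>z. if n \<le> m then of_nat (m choose n) * (f n z - A n z) else 0)" for n
      unfolding cc_def rr_def by (simp add: fun_eq_iff coeff_tp algebra_simps)
    have scc: "smooth (cc n)" for n
      unfolding cc_eq using sf sA by (intro smooth_if smooth_mult smooth_const smooth_diff') auto
    have pcc: "periodic w1 w2 (cc n)" for n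
      using pf tA unfolding cc_eq periodic_def tfield_def by (simp add: A_def Aexp_def)
    define Q where "Q j z = (if j \<le> k then qrec cc j z * (complex_of_real (exp ((- 2) * mu z)) * (1 / of_nat (k choose j))) else 0)" for j z
    have sQ: "smooth (Q j)" for j
      unfolding Q_def[abs_def] using smooth_qrec[of cc j, OF scc]
      by (intro smooth_if smooth_mult smooth_E[OF mu] smooth_const) auto
    have pQ: "periodic w1 w2 (Q j)" for j
      using periodic_qrec[of w1 w2 cc j, OF pcc] pmu unfolding Q_def[abs_def] periodic_def by simp
    have tQ: "tfield w1 w2 k Q" unfolding tfield_def using sQ pQ by (simp add: Q_def fun_eq_iff)
    have cq: "coeff (qq z) n = qrec cc n z" for n z unfolding cc_def[abs_def] using coeff_qrec[of rr qq z n] rq by blast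
    have q0: "coeff (qq z) n = 0" if "k < n" for n z
    proof (cases "qq z = 0")
      case False
      then have "degree (qq z) < n" using qdeg[of z] that mk by simp
      then show ?thesis by (rule coeff_eq_0)
    qed simp
    have tpQ: "tp k Q z = smult (complex_of_real (exp ((- 2) * mu z))) (qq z)" for z
    proof (rule poly_eqI)
      fix n show "coeff (tp k Q z) n = coeff (smult (complex_of_real (exp ((- 2) * mu z))) (qq z)) n"
      proof (cases "n \<le> k")
        case True then show ?thesis by (simp add: coeff_tp Q_def cq)
      next
        case False then show ?thesis by (simp add: coeff_tp q0)
      qed
    qed
    define G where "G = sprod 2 k (metric_tensor mu) Q"
    have tG: "tfield w1 w2 (2 + k) G" unfolding G_def by (rule tfield_sprod[OF tfield_metric[OF mu pmu] tQ])
    have sG: "\<forall>j. smooth (G j)" using tG tfield_smooth_all by blast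
    have tpG: "tp m G z = rr z" for z
    proof -
      have "tp m G z = tp 2 (metric_tensor mu) z * tp k Q z"
        using tp_sprod[of 2 k "metric_tensor mu" Q z] mk by (simp add: G_def add.commute)
      also have "\<dots> = smult (complex_of_real (exp (2 * mu z)) * complex_of_real (exp ((- 2) * mu z))) ([:1, 0, 1:] * qq z)"
        unfolding tp_metric_poly tpQ by (simp only: mult_smult_left mult_smult_right smult_smult mult.commute)
      also have "complex_of_real (exp (2 * mu z)) * complex_of_real (exp ((- 2) * mu z)) = 1"
        by (simp flip: of_real_mult exp_add)
      finally show ?thesis by (simp add: rq)
    qed
    have fAG: "f = (\<lambda>j z. A j z + G j z)"
    proof (intro ext)
      fix j z show "f j z = A j z + G j z"
      proof (cases "j \<le> m")
        case True
        have "tp m f z = tp m (\<lambda>j z. A j z + G j z) z" unfolding tp_add tpG rr_def by simp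
        then show ?thesis using True by (simp add: tp_eq_iff)
      next
        case False then show ?thesis using f0[of j z] mk by (simp add: A_def Aexp_def G_def sprod_def)
      qed
    qed
    have eq0: "poly (tp (m + 1) (dsym mu m A) z) t + poly (tp (m + 1) (dsym mu m G) z) t = 0" for z t
    proof -
      have "dsym mu m (\<lambda>j z. A j z + G j z) = (\<lambda>j z. 0)" using Df fAG by simp
      then have "(\<lambda>j z. dsym mu m A j z + dsym mu m G j z) = (\<lambda>j z. 0)" by (simp add: dsym_add[OF sA sG])
      then have "tp (m + 1) (\<lambda>j z. dsym mu m A j z + dsym mu m G j z) z = 0" by (simp add: tp_def)
      then have "tp (m + 1) (dsym mu m A) z + tp (m + 1) (dsym mu m G) z = 0" by (simp only: tp_add)
      then show ?thesis by (metis poly_add poly_0)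
    qed
    have DG: "poly (tp (m + 1) (dsym mu m G) z) t = complex_of_real (exp (2 * mu z)) * (1 + t^2) * poly (tp (k + 1) (dsym mu k Q) z) t" for z t
      using D_G[OF mu, of k Q z t] sQ mk by (simp add: G_def)
    have Zeq: "Zfield mu (k + 1) C1 C2 j z + dsym mu k Q j z = 0" for j z
    proof -
      have "\<And>t. complex_of_real (exp (2 * mu z)) * (1 + t^2) * poly (tp (k + 1) (\<lambda>j z. Zfield mu (k + 1) C1 C2 j z + dsym mu k Q j z) z) t = 0"
      proof -
        fix t
        have "complex_of_real (exp (2 * mu z)) * (1 + t^2) * poly (tp (k + 1) (\<lambda>j z. Zfield mu (k + 1) C1 C2 j z + dsym mu k Q j z) z) t
           = poly (tp (m + 1) (dsym mu m A) z) t + poly (tp (m + 1) (dsym mu m G) z) t"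
          unfolding DAf DG tp_add poly_add using mk by (simp add: algebra_simps)
        then show "complex_of_real (exp (2 * mu z)) * (1 + t^2) * poly (tp (k + 1) (\<lambda>j z. Zfield mu (k + 1) C1 C2 j z + dsym mu k Q j z) z) t = 0"
          using eq0[of z t] by simp
      qed
      then have z0: "tp (k + 1) (\<lambda>j z. Zfield mu (k + 1) C1 C2 j z + dsym mu k Q j z) z = 0" by (rule poly_zero_d) simp
      show ?thesis
      proof (cases "j \<le> k + 1")
        case True
        have "tp (k + 1) (\<lambda>j z. Zfield mu (k + 1) C1 C2 j z + dsym mu k Q j z) z = tp (k + 1) (\<lambda>j z. 0) z"
          using z0 by (simp add: tp_def)
        then show ?thesis using True by (simp add: tp_eq_iff)
      next
        case False then show ?thesis by (simp add: Zfield_def dsym_def)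
      qed
    qed
    have DQ: "dsym mu k Q = Zfield mu (k + 1) (of_real (- (2 * real m * Re \<alpha>))) (of_real (- (2 * real m * Im \<alpha>)))"
    proof (intro ext)
      fix j z
      have "dsym mu k Q j z = (Zfield mu (k + 1) C1 C2 j z + dsym mu k Q j z) - Zfield mu (k + 1) C1 C2 j z" by simp
      also have "\<dots> = - Zfield mu (k + 1) C1 C2 j z" using Zeq[of j z] by simp
      also have "\<dots> = Zfield mu (k + 1) (- C1) (- C2) j z" by (simp add: Zfield_neg)
      finally show "dsym mu k Q j z = Zfield mu (k + 1) (of_real (- (2 * real m * Re \<alpha>))) (of_real (- (2 * real m * Im \<alpha>))) j z"
        by (simp add: C1r C2r)
    qed
    show ?thesis
    proof (cases "\<alpha> = 0")
      case True
      have DQ0: "dsym mu k Q = (\<lambda>j z. 0)" using DQ True by (simp add: Zfield_zero)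
      have fG: "f = G" using fAG A0[OF True] by simp
      show ?thesis
      proof (cases "k = 0")
        case True
        have px: "pdx (Q 0) z = 0" and py: "pdy (Q 0) z = 0" for z
          using fun_cong[OF fun_cong[OF DQ0, of 0], of z] fun_cong[OF fun_cong[OF DQ0, of 1], of z] True
          by (simp_all add: dsym_def nab_def pd_def)
        obtain c0 where c0: "\<forall>z. Q 0 z = c0" using zero_deriv_const[OF sQ px py] by blast
        have "f = (\<lambda>j z. c0 * metric_tensor mu j z)"
        proof (intro ext)
          fix j z show "f j z = c0 * metric_tensor mu j z"
          proof (cases "j \<le> 2")
            case j: True
            have "tp 2 f z = tp 2 (metric_tensor mu) z * tp 0 Q z"
              using tp_sprod[of 2 0 "metric_tensor mu" Q z] True mk fG by (simp add: G_def)
            also have "\<dots> = tp 2 (\<lambda>j z. c0 * metric_tensor mu j z) z"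
              using tp_cmult[of 2 "\<lambda>z. c0" "metric_tensor mu" z] by (simp add: tp_0 c0)
            finally show ?thesis using j by (simp add: tp_eq_iff)
          next
            case False then show ?thesis using f0[of j z] mk True by (simp add: metric_tensor_def)
          qed
        qed
        moreover have m2: "m = 2" using mk True by simp
        moreover have "irreducible_killing w1 w2 mu 2 f" using irr unfolding m2 .
        ultimately have False using irr_metric by blast
        then show ?thesis ..
      next
        case False
        have KQ: "killing w1 w2 mu k Q" using tQ DQ0 by (simp add: killing_def)
        have Kg: "killing w1 w2 mu 2 (metric_tensor mu)" by (rule killing_metric[OF mu pmu])
        have h2: "f = (\<lambda>j z. \<Sum>i<(1::nat). sprod ((\<lambda>_. 2) i) ((\<lambda>_. k) i) ((\<lambda>_. metric_tensor mu) i) ((\<lambda>_. Q) i) j z)"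
          using fG by (simp add: G_def)
        have h1: "\<forall>i<(1::nat). 0 < (\<lambda>_. 2::nat) i \<and> 0 < (\<lambda>_. k) i \<and> (\<lambda>_. 2) i + (\<lambda>_. k) i = m \<and>
                   killing w1 w2 mu ((\<lambda>_. 2) i) ((\<lambda>_. metric_tensor mu) i) \<and> killing w1 w2 mu ((\<lambda>_. k) i) ((\<lambda>_. Q) i)"
          using False KQ Kg mk by simp
        have False by (rule irr_decomp[OF irr h1 h2])
        then show ?thesis ..
      qed
    next
      case False
      have "potential w1 w2 mu (m - 1) (Zfield mu (m - 1) (of_real (- (2 * real m * Re \<alpha>))) (of_real (- (2 * real m * Im \<alpha>))))"
        unfolding potential_def using mk tQ DQ by auto
      then show ?thesis using cne'[OF False] by blast
    qed
  qed
qed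

lemma decomp_poly:
  assumes "\<forall>i<n. ku i + kv i = m" "f = (\<lambda>j z. \<Sum>i<n. sprod (ku i) (kv i) (u i) (v i) j z)"
  shows "poly (tp m f z) t = (\<Sum>i<n. poly (tp (ku i) (u i) z) t * poly (tp (kv i) (v i) z) t)"
proof -
  have "tp m f z = (\<Sum>i<n. tp m (sprod (ku i) (kv i) (u i) (v i)) z)"
    unfolding assms(2) by (rule tp_sum)
  also have "\<dots> = (\<Sum>i<n. tp (ku i) (u i) z * tp (kv i) (v i) z)"
    using assms(1) by (intro sum.cong refl) (metis lessThan_iff tp_sprod)
  finally show ?thesis by (simp add: poly_sum)
qed

lemma dir2:
  assumes lat: "is_lattice w1 w2" and mu: "smooth mu" and pmu: "periodic w1 w2 mu" and m: "1 \<le> m"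
    and H: "\<forall>k. 1 \<le> k \<and> k \<le> m - 1 \<longrightarrow> \<not> (\<exists>f. irreducible_killing w1 w2 mu k f)"
    and cne: "(c1, c2) \<noteq> (0, 0)" and pot: "potential w1 w2 mu (m - 1) (Zfield mu (m - 1) c1 c2)"
  shows "\<exists>f. irreducible_killing w1 w2 mu m f"
proof -
  define \<alpha> where "\<alpha> = - (c1 + \<i> * c2) / (2 * of_nat m)"
  define \<beta> where "\<beta> = - (c1 - \<i> * c2) / (2 * of_nat m)"
  have mne: "(of_nat m :: complex) \<noteq> 0" using m by simp
  have C1: "of_nat m * (\<alpha> + \<beta>) = - c1" using mne by (simp add: \<alpha>_def \<beta>_def field_simps)
  have C2: "- \<i> * of_nat m * (\<alpha> - \<beta>) = - c2"
  proof -
    have "\<alpha> - \<beta> = - (\<i> * c2) / of_nat m" using mne by (simp add: \<alpha>_def \<beta>_def field_simps)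
    then have "of_nat m * (\<alpha> - \<beta>) = - (\<i> * c2)" using mne by simp
    then have "- \<i> * (of_nat m * (\<alpha> - \<beta>)) = - c2" by simp
    then show ?thesis by (simp add: mult.assoc)
  qed
  have ab: "\<alpha> \<noteq> 0 \<or> \<beta> \<noteq> 0"
  proof (rule ccontr)
    assume "\<not> (\<alpha> \<noteq> 0 \<or> \<beta> \<noteq> 0)"
    then have "c1 + \<i> * c2 = 0" "c1 - \<i> * c2 = 0" using mne by (auto simp: \<alpha>_def \<beta>_def)
    then have "c1 = 0" "c2 = 0" by (auto simp: complex_eq_iff)
    then show False using cne by simp
  qed
  define A where "A = Aexp mu m \<alpha> \<beta>"
  have tA: "tfield w1 w2 m A" unfolding A_def by (rule tfield_Aexp[OF mu pmu])
  have sA: "\<forall>j. smooth (A j)" using tA tfield_smooth_all by blast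
  have DAm: "poly (tp (m + 1) (dsym mu m A) z) t = complex_of_real (exp (2 * mu z)) * (1 + t^2) *
     poly (tp (m - 1) (Zfield mu (m - 1) (- c1) (- c2)) z) t" for z t
    using DA[OF mu m, of \<alpha> \<beta> z t] unfolding A_def C1 C2 .
  have Zneg: "tp k (Zfield mu k (- c1) (- c2)) z = - tp k (Zfield mu k c1 c2) z" for k z
    by (rule poly_eqI) (simp add: coeff_tp Zfield_neg)
  have "\<exists>f. tfield w1 w2 m f \<and> dsym mu m f = (\<lambda>j z. 0) \<and>
          (\<forall>z. poly (tp m f z) \<i> = poly (tp m A z) \<i> \<and> poly (tp m f z) (- \<i>) = poly (tp m A z) (- \<i>))"
  proof (cases "m = 1")
    case True
    have Z0: "Zfield mu 0 c1 c2 = (\<lambda>j z. 0)" using pot True by (simp add: potential_def)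
    have "dsym mu m A = (\<lambda>j z. 0)"
    proof (rule dsym_zero)
      fix z t
      have "tp 0 (Zfield mu 0 (- c1) (- c2)) z = 0" unfolding Zneg Z0 by (simp add: tp_def)
      then show "poly (tp (m + 1) (dsym mu m A) z) t = 0" unfolding DAm using True by simp
    qed
    then show ?thesis using tA by blast
  next
    case False
    define k where "k = m - 2"
    have mk: "m = k + 2" using m False unfolding k_def by simp
    obtain v where tv: "tfield w1 w2 k v" and Dv: "Zfield mu (k + 1) c1 c2 = dsym mu k v"
      using pot mk by (auto simp: potential_def)
    have sv: "\<forall>j\<le>k. smooth (v j)" using tv tfield_smooth_all by blast
    define G where "G = sprod 2 k (metric_tensor mu) v"
    have tG: "tfield w1 w2 m G" unfolding G_def using tfield_sprod[OF tfield_metric[OF mu pmu] tv] mk by (simp add: add.commute)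
    have sG: "\<forall>j. smooth (G j)" using tG tfield_smooth_all by blast
    define f where "f = (\<lambda>j z. A j z + G j z)"
    have tf: "tfield w1 w2 m f" unfolding f_def by (rule tfield_add[OF tA tG])
    have DG: "poly (tp (m + 1) (dsym mu m G) z) t = complex_of_real (exp (2 * mu z)) * (1 + t^2) * poly (tp (k + 1) (dsym mu k v) z) t" for z t
      using D_G[OF mu sv, of z t] mk by (simp add: G_def)
    have Df: "dsym mu m f = (\<lambda>j z. 0)"
    proof (rule dsym_zero)
      fix z t
      have "tp (m + 1) (dsym mu m f) z = tp (m + 1) (dsym mu m A) z + tp (m + 1) (dsym mu m G) z"
        unfolding f_def dsym_add[OF sA sG] tp_add ..
      then have "poly (tp (m + 1) (dsym mu m f) z) t = poly (tp (m + 1) (dsym mu m A) z) t + poly (tp (m + 1) (dsym mu m G) z) t"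
        by simp
      also have "\<dots> = complex_of_real (exp (2 * mu z)) * (1 + t^2) *
          (poly (- tp (k + 1) (Zfield mu (k + 1) c1 c2) z) t + poly (tp (k + 1) (Zfield mu (k + 1) c1 c2) z) t)"
        unfolding DAm DG Zneg Dv[symmetric] using mk by (simp add: algebra_simps)
      also have "\<dots> = 0" by simp
      finally show "poly (tp (m + 1) (dsym mu m f) z) t = 0" .
    qed
    have "poly (tp m f z) \<i> = poly (tp m A z) \<i> \<and> poly (tp m f z) (- \<i>) = poly (tp m A z) (- \<i>)" for z
      using poly_G_i[of k mu v z] mk unfolding f_def tp_add by (simp add: G_def)
    then show ?thesis using tf Df by blast
  qed
  then obtain f where tf: "tfield w1 w2 m f" and Df: "dsym mu m f = (\<lambda>j z. 0)"
    and fi: "\<And>z. poly (tp m f z) \<i> = poly (tp m A z) \<i>" and fmi: "\<And>z. poly (tp m f z) (- \<i>) = poly (tp m A z) (- \<i>)"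
    by blast
  have K: "killing w1 w2 mu m f" using tf Df by (simp add: killing_def)
  have nz: "poly (tp m f z) \<i> \<noteq> 0 \<or> poly (tp m f z) (- \<i>) \<noteq> 0" for z
    unfolding fi fmi A_def poly_A_i[OF m] using ab by simp
  have nodec: "\<not> (\<exists>(n::nat) ku kv u v.
            (\<forall>i<n. 0 < ku i \<and> 0 < kv i \<and> ku i + kv i = m \<and>
                   killing w1 w2 mu (ku i) (u i) \<and> killing w1 w2 mu (kv i) (v i)) \<and>
            f = (\<lambda>j z. \<Sum>i<n. sprod (ku i) (kv i) (u i) (v i) j z))"
  proof
    assume "\<exists>(n::nat) ku kv u v.
            (\<forall>i<n. 0 < ku i \<and> 0 < kv i \<and> ku i + kv i = m \<and>
                   killing w1 w2 mu (ku i) (u i) \<and> killing w1 w2 mu (kv i) (v i)) \<and>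
            f = (\<lambda>j z. \<Sum>i<n. sprod (ku i) (kv i) (u i) (v i) j z)"
    then show False
    proof (elim exE conjE)
      fix n :: nat and ku kv :: "nat \<Rightarrow> nat" and u v
      assume hyp: "\<forall>i<n. 0 < ku i \<and> 0 < kv i \<and> ku i + kv i = m \<and>
                   killing w1 w2 mu (ku i) (u i) \<and> killing w1 w2 mu (kv i) (v i)"
        and h: "f = (\<lambda>j z. \<Sum>i<n. sprod (ku i) (kv i) (u i) (v i) j z)"
      have pt: "poly (tp m f 0) t = (\<Sum>i<n. poly (tp (ku i) (u i) 0) t * poly (tp (kv i) (v i) 0) t)" for t
        by (rule decomp_poly) (use hyp h in auto)
      have iu: "poly (tp (ku i) (u i) 0) \<i> = 0 \<and> poly (tp (ku i) (u i) 0) (- \<i>) = 0" if "i < n" for i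
        using hyp that by (intro vanish[OF H]) auto
      show False using nz[of 0] unfolding pt using iu by simp
    qed
  qed
  have nomet: "m = 2 \<longrightarrow> \<not> (\<exists>c::complex. f = (\<lambda>j z. c * metric_tensor mu j z))"
  proof (intro impI notI)
    assume m2: "m = 2" and "\<exists>c::complex. f = (\<lambda>j z. c * metric_tensor mu j z)"
    then obtain c where h: "f = (\<lambda>j z. c * metric_tensor mu j z)" by blast
    have "tp m f 0 = smult c (tp 2 (metric_tensor mu) 0)"
      unfolding h m2 using tp_cmult[of 2 "\<lambda>z. c" "metric_tensor mu" 0] by simp
    then show False using nz[of 0] by (simp add: poly_metric_i)
  qed
  have "irreducible_killing w1 w2 mu m f" unfolding irreducible_killing_def using K nodec nomet by blast
  then show ?thesis by blast
qed

theorem theorem3p2: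
  fixes w1 w2 :: complex and mu :: "complex \<Rightarrow> real" and m :: nat
  assumes "is_lattice w1 w2" and "smooth mu" and "periodic w1 w2 mu" and "1 \<le> m"
  shows "((\<exists>f. real_field f \<and> irreducible_killing w1 w2 mu m f) \<longrightarrow>
            (\<exists>c1 c2 :: real. (c1, c2) \<noteq> (0, 0) \<and>
               potential w1 w2 mu (m - 1) (Zfield mu (m - 1) (of_real c1) (of_real c2))))
       \<and> ((\<forall>k. 1 \<le> k \<and> k \<le> m - 1 \<longrightarrow> \<not> (\<exists>f. irreducible_killing w1 w2 mu k f)) \<longrightarrow>
            (\<exists>c1 c2 :: complex. (c1, c2) \<noteq> (0, 0) \<and>
               potential w1 w2 mu (m - 1) (Zfield mu (m - 1) c1 c2)) \<longrightarrow>
            (\<exists>f. irreducible_killing w1 w2 mu m f))"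
  proof (intro conjI impI)
  assume "\<exists>f. real_field f \<and> irreducible_killing w1 w2 mu m f"
  then obtain f where fr: "real_field f" and irr: "irreducible_killing w1 w2 mu m f" by blast
  show "\<exists>c1 c2 :: real. (c1, c2) \<noteq> (0, 0) \<and>
               potential w1 w2 mu (m - 1) (Zfield mu (m - 1) (of_real c1) (of_real c2))"
    by (rule dir1[OF assms(1) assms(2) assms(3) assms(4) fr irr])
next
  assume H: "\<forall>k. 1 \<le> k \<and> k \<le> m - 1 \<longrightarrow> \<not> (\<exists>f. irreducible_killing w1 w2 mu k f)"
    and "\<exists>c1 c2 :: complex. (c1, c2) \<noteq> (0, 0) \<and> potential w1 w2 mu (m - 1) (Zfield mu (m - 1) c1 c2)"
  then obtain c1 c2 :: complex where cne: "(c1, c2) \<noteq> (0, 0)" and pot: "potential w1 w2 mu (m - 1) (Zfield mu (m - 1) c1 c2)"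
    by blast
  show "\<exists>f. irreducible_killing w1 w2 mu m f"
    by (rule dir2[OF assms(1) assms(2) assms(3) assms(4) H cne pot])
qed

end
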